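(* Let $\Gamma$ be a metric graph as described in the context. A function $u\colon\Gamma\to\mathbb{R}$ is convex if and only if $u$ is a viscosity sub-solution of the problem \[ u''=0 \text{ on the edges of }\Gamma,\qquad \min_{\mathrm{e},\bar{\mathrm{e}}\in\mathrm{E}_{\mathrm{v}}}\Big\{\frac{\partial u}{\partial x_{\mathrm{e}}}(\mathrm{v})+\frac{\partial u}{\partial x_{\bar{\mathrm{e}}}}(\mathrm{v})\Big\}=0 \text{ for interior vertices } \mathrm{v},\qquad u(\mathrm{v})=\lim_{x\to\mathrm{v}}u(x)\text{ for terminal vertices }\mathrm{v}. \]
   Context: $\Gamma$ is a metric graph: a finite, connected, simple graph with vertex set $\mathrm{V}$ and edge set $\mathrm{E}$ (bounded degrees $\ge1$), each edge $\mathrm{e}$ identified with an interval $[0,\ell_{\mathrm{e}}]$ via an orientation (initial vertex $\mathrm{e}_-$ at $0$, terminal vertex $\mathrm{e}_+$ at $\ell_{\mathrm{e}}$). $\Gamma$ is a connected compact metric space with path distance $d$, with $d(x,y)=|x-y|$ for points on the same edge; $[x,y]$ is the minimal path between $x$ and $y$. $\mathrm{E}_{\mathrm{v}}$ is the set of edges incident to $\mathrm{v}$; a vertex is interior if its degree exceeds $1$, terminal otherwise. The ingoing derivative at $\mathrm{v}$ along $\mathrm{e}$ is $\frac{\partial u}{\partial x_{\mathrm{e}}}(\mathrm{v})=u_{\mathrm{e}}'(\mathrm{v})$ if $\mathrm{v}=\mathrm{e}_-$ and $-u_{\mathrm{e}}'(\mathrm{v})$ if $\mathrm{v}=\mathrm{e}_+$.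 A function $u$ is convex if $u(z)\le\frac{d(y,z)}{d(x,y)}u(x)+\frac{d(x,z)}{d(x,y)}u(y)$ for all $x,y\in\Gamma$ and $z\in[x,y]$. An upper semicontinuous $u$ is a viscosity sub-solution of the problem if: for every $x_0\in\Gamma\setminus\mathrm{V}$, $\delta>0$ and $\varphi\in C^2(x_0-\delta,x_0+\delta)$ with $\varphi(x_0)=u(x_0)$ and $\varphi\ge u$ on $(x_0-\delta,x_0+\delta)$, one has $\varphi''(x_0)\ge0$; and for every interior vertex $\mathrm{v}$, $\mathrm{e},\bar{\mathrm{e}}\in\mathrm{E}_{\mathrm{v}}$ and $\varphi\in C^1(\mathrm{e}\cup\bar{\mathrm{e}})$ with $\varphi(\mathrm{v})=u(\mathrm{v})$ and $\varphi\ge u$ on $\mathrm{e}\cup\bar{\mathrm{e}}$, one has $\frac{\partial \varphi}{\partial x_{\mathrm{e}}}(\mathrm{v})+\frac{\partial \varphi}{\partial x_{\bar{\mathrm{e}}}}(\mathrm{v})\ge0$. *)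

theory Defs
  imports "HOL-Analysis.Analysis"
begin

text \<open>A metric graph: vertex set, edge set, orientation of every edge
  (initial vertex esrc = e_-, terminal vertex etgt = e_+) and edge lengths.\<close>

record ('v, 'e) mgraph =
  mverts :: "'v set"
  medges :: "'e set"
  esrc :: "'e \<Rightarrow> 'v"
  etgt :: "'e \<Rightarrow> 'v"
  elen :: "'e \<Rightarrow> real"

text \<open>Points of the metric graph: vertices, and interior points of edges
  (edge e, coordinate t with 0 < t < len e).\<close>

datatype ('v, 'e) gpoint = GV 'v | GE 'e real

definition gpoints :: "('v, 'e) mgraph \<Rightarrow> ('v, 'e) gpoint set" where
  "gpoints G = GV ` mverts G \<union>
     {GE e t | e t. e \<in> medges G \<and> 0 < t \<and> t < elen G e}"

definition gpos :: "('v, 'e) mgraph \<Rightarrow> 'e \<Rightarrow> real \<Rightarrow> ('v, 'e) gpoint" where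
  "gpos G e s = (if s = 0 then GV (esrc G e)
                 else if s = elen G e then GV (etgt G e) else GE e s)"

definition inc_edges :: "('v, 'e) mgraph \<Rightarrow> 'v \<Rightarrow> 'e set" where
  "inc_edges G v = {e \<in> medges G. esrc G e = v \<or> etgt G e = v}"

definition adjacent :: "('v, 'e) mgraph \<Rightarrow> 'v \<Rightarrow> 'v \<Rightarrow> bool" where
  "adjacent G a b = (\<exists>e\<in>medges G. {a, b} = {esrc G e, etgt G e})"

inductive walk :: "('v, 'e) mgraph \<Rightarrow> 'v \<Rightarrow> 'v \<Rightarrow> real \<Rightarrow> bool" for G where
  walk_nil: "a \<in> mverts G \<Longrightarrow> walk G a a 0"
| walk_fwd: "e \<in> medges G \<Longrightarrow> walk G (etgt G e) b L \<Longrightarrow> walk G (esrc G e) b (elen G e + L)"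
| walk_bwd: "e \<in> medges G \<Longrightarrow> walk G (esrc G e) b L \<Longrightarrow> walk G (etgt G e) b (elen G e + L)"

definition vdist :: "('v, 'e) mgraph \<Rightarrow> 'v \<Rightarrow> 'v \<Rightarrow> real" where
  "vdist G a b = Inf {L. walk G a b L}"

fun anch :: "('v, 'e) mgraph \<Rightarrow> ('v, 'e) gpoint \<Rightarrow> ('v \<times> real) set" where
  "anch G (GV v) = {(v, 0)}"
| "anch G (GE e t) = {(esrc G e, t), (etgt G e, elen G e - t)}"

text \<open>Path distance on the metric graph: shortest length of a path, either
  inside one closed edge or leaving through edge endpoints.\<close>

definition gdist :: "('v, 'e) mgraph \<Rightarrow> ('v, 'e) gpoint \<Rightarrow> ('v, 'e) gpoint \<Rightarrow> real" where
  "gdist G p q = Inf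
     ({a + vdist G x y + b | x a y b. (x, a) \<in> anch G p \<and> (y, b) \<in> anch G q}
      \<union> {\<bar>s - t\<bar> | e s t. e \<in> medges G \<and> s \<in> {0..elen G e} \<and> t \<in> {0..elen G e}
            \<and> p = gpos G e s \<and> q = gpos G e t})"

definition metric_graph :: "('v, 'e) mgraph \<Rightarrow> bool" where
  "metric_graph G \<longleftrightarrow>
     finite (mverts G) \<and> finite (medges G) \<and> mverts G \<noteq> {} \<and>
     (\<forall>e\<in>medges G. esrc G e \<in> mverts G \<and> etgt G e \<in> mverts G
                    \<and> esrc G e \<noteq> etgt G e \<and> 0 < elen G e) \<and>
     \<comment> \<open>simple: no multiple edges\<close>
     (\<forall>e1\<in>medges G. \<forall>e2\<in>medges G.
        {esrc G e1, etgt G e1} = {esrc G e2, etgt G e2} \<longrightarrow> e1 = e2) \<and>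
     \<comment> \<open>every vertex has degree at least 1\<close>
     (\<forall>v\<in>mverts G. inc_edges G v \<noteq> {}) \<and>
     \<comment> \<open>connected\<close>
     (\<forall>a\<in>mverts G. \<forall>b\<in>mverts G. (adjacent G)\<^sup>*\<^sup>* a b) \<and>
     \<comment> \<open>d(x,y) = |x - y| for points on the same edge\<close>
     (\<forall>e\<in>medges G. \<forall>s\<in>{0..elen G e}. \<forall>t\<in>{0..elen G e}.
        gdist G (gpos G e s) (gpos G e t) = \<bar>s - t\<bar>)"

text \<open>z \<in> [x,y] (z lies on a minimal path from x to y) iff d(x,z) + d(z,y) = d(x,y).\<close>

definition on_min_path :: "('v, 'e) mgraph \<Rightarrow> ('v, 'e) gpoint \<Rightarrow> ('v, 'e) gpoint \<Rightarrow> ('v, 'e) gpoint \<Rightarrow> bool" where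
  "on_min_path G x y z \<longleftrightarrow> gdist G x z + gdist G z y = gdist G x y"

definition mg_convex :: "('v, 'e) mgraph \<Rightarrow> (('v, 'e) gpoint \<Rightarrow> real) \<Rightarrow> bool" where
  "mg_convex G u \<longleftrightarrow>
     (\<forall>x\<in>gpoints G. \<forall>y\<in>gpoints G. \<forall>z\<in>gpoints G. x \<noteq> y \<and> on_min_path G x y z \<longrightarrow>
        u z \<le> gdist G y z / gdist G x y * u x + gdist G x z / gdist G x y * u y)"

definition mg_usc :: "('v, 'e) mgraph \<Rightarrow> (('v, 'e) gpoint \<Rightarrow> real) \<Rightarrow> bool" where
  "mg_usc G u \<longleftrightarrow>
     (\<forall>x\<in>gpoints G. \<forall>\<epsilon>>0. \<exists>\<delta>>0. \<forall>y\<in>gpoints G. gdist G x y < \<delta> \<longrightarrow> u y < u x + \<epsilon>)"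

definition C2_on :: "real set \<Rightarrow> (real \<Rightarrow> real) \<Rightarrow> (real \<Rightarrow> real) \<Rightarrow> (real \<Rightarrow> real) \<Rightarrow> bool" where
  "C2_on I f f' f'' \<longleftrightarrow>
     (\<forall>s\<in>I. (f has_real_derivative f' s) (at s) \<and> (f' has_real_derivative f'' s) (at s))
     \<and> continuous_on I f''"

definition C1_closed :: "real \<Rightarrow> (real \<Rightarrow> real) \<Rightarrow> (real \<Rightarrow> real) \<Rightarrow> bool" where
  "C1_closed l f f' \<longleftrightarrow>
     (\<forall>s\<in>{0..l}. (f has_real_derivative f' s) (at s within {0..l})) \<and> continuous_on {0..l} f'"

definition ingoing :: "('v, 'e) mgraph \<Rightarrow> 'e \<Rightarrow> 'v \<Rightarrow> (real \<Rightarrow> real) \<Rightarrow> real" where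
  "ingoing G e v f' = (if v = esrc G e then f' 0 else - f' (elen G e))"

definition viscosity_subsolution :: "('v, 'e) mgraph \<Rightarrow> (('v, 'e) gpoint \<Rightarrow> real) \<Rightarrow> bool" where
  "viscosity_subsolution G u \<longleftrightarrow>
     mg_usc G u \<and>
     \<comment> \<open>edge condition: u'' \<ge> 0 in the viscosity sense at interior points of edges\<close>
     (\<forall>e\<in>medges G. \<forall>t. 0 < t \<and> t < elen G e \<longrightarrow>
        (\<forall>\<delta>>0. \<forall>\<phi> \<phi>' \<phi>''. C2_on {t - \<delta> <..< t + \<delta>} \<phi> \<phi>' \<phi>'' \<and> \<phi> t = u (GE e t) \<and>
           (\<forall>s. \<bar>s - t\<bar> < \<delta> \<and> 0 < s \<and> s < elen G e \<longrightarrow> u (GE e s) \<le> \<phi> s)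
           \<longrightarrow> \<phi>'' t \<ge> 0)) \<and>
     \<comment> \<open>vertex condition at interior vertices, for two distinct incident edges\<close>
     (\<forall>v\<in>mverts G. card (inc_edges G v) > 1 \<longrightarrow>
        (\<forall>e\<in>inc_edges G v. \<forall>e'\<in>inc_edges G v. e \<noteq> e' \<longrightarrow>
          (\<forall>\<phi> \<phi>e' \<phi>f'.
             C1_closed (elen G e) (\<lambda>s. \<phi> (gpos G e s)) \<phi>e' \<and>
             C1_closed (elen G e') (\<lambda>s. \<phi> (gpos G e' s)) \<phi>f' \<and>
             \<phi> (GV v) = u (GV v) \<and>
             (\<forall>s\<in>{0..elen G e}. u (gpos G e s) \<le> \<phi> (gpos G e s)) \<and>
             (\<forall>s\<in>{0..elen G e'}. u (gpos G e' s) \<le> \<phi> (gpos G e' s))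
             \<longrightarrow> ingoing G e v \<phi>e' + ingoing G e' v \<phi>f' \<ge> 0)))"

end

theory Submission
  imports Defs "HOL-Analysis.Analysis"
begin

definition uscI :: "real set \<Rightarrow> (real \<Rightarrow> real) \<Rightarrow> bool" where
  "uscI S H \<longleftrightarrow> (\<forall>x\<in>S. \<forall>e>0. \<exists>d>0. \<forall>y\<in>S. \<bar>y - x\<bar> < d \<longrightarrow> H y < H x + e)"

lemma usc_bdd_above:
  assumes "a \<le> b" "uscI {a..b} H"
  shows "\<exists>M. \<forall>x\<in>{a..b}. H x \<le> M"
proof -
  define P where "P c d = (\<exists>M. \<forall>x\<in>{c..d} \<inter> {a..b}. H x \<le> M)" for c d
  have "P a b"
    using assms(1)
  proof (induction rule: Bolzano)
    case (trans c d f)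
    then obtain M1 M2 where M12: "\<forall>x\<in>{c..d} \<inter> {a..b}. H x \<le> M1" "\<forall>x\<in>{d..f} \<inter> {a..b}. H x \<le> M2"
      unfolding P_def by blast
    have "H x \<le> max M1 M2" if "x \<in> {c..f} \<inter> {a..b}" for x
    proof (cases "x \<le> d")
      case True
      then have "x \<in> {c..d} \<inter> {a..b}" using that by auto
      then have "H x \<le> M1" using M12(1) by blast
      then show ?thesis by simp
    next
      case False
      then have "x \<in> {d..f} \<inter> {a..b}" using that by auto
      then have "H x \<le> M2" using M12(2) by blast
      then show ?thesis by simp
    qed
    then show ?case unfolding P_def by blast
  next
    case (local x)
    then obtain d where d: "d > 0" "\<forall>y\<in>{a..b}. \<bar>y - x\<bar> < d \<longrightarrow> H y < H x + 1"
      using assms(2) unfolding uscI_def by (meson atLeastAtMost_iff zero_less_one)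
    show ?case
    proof (intro exI[of _ d] conjI allI impI)
      fix c f assume cxf: "c \<le> x \<and> x \<le> f \<and> f - c < d"
      have "H y \<le> H x + 1" if "y \<in> {c..f} \<inter> {a..b}" for y
      proof -
        have "\<bar>y - x\<bar> < d" using that cxf by auto
        then show ?thesis using d(2) that by (meson IntE less_imp_le)
      qed
      then show "P c f" unfolding P_def by blast
    qed (use d in auto)
  qed
  then show ?thesis unfolding P_def by simp
qed

lemma usc_max:
  assumes "a \<le> b" "uscI {a..b} H"
  shows "\<exists>m\<in>{a..b}. \<forall>x\<in>{a..b}. H x \<le> H m"
proof (rule ccontr)
  assume nm: "\<not> ?thesis"
  obtain M0 where M0: "\<forall>x\<in>{a..b}. H x \<le> M0" using usc_bdd_above[OF assms] by blast
  define M where "M = Sup (H ` {a..b})"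
  have bdd: "bdd_above (H ` {a..b})" using M0 by (auto simp: bdd_above_def)
  have le: "H x \<le> M" if "x \<in> {a..b}" for x
    unfolding M_def using bdd that by (intro cSup_upper) auto
  have lt: "H x < M" if "x \<in> {a..b}" for x
  proof -
    from nm that obtain y where "y \<in> {a..b}" "H y > H x" by (meson not_le)
    with le[of y] show ?thesis by linarith
  qed
  define P where "P c d = (\<exists>K<M. \<forall>x\<in>{c..d} \<inter> {a..b}. H x \<le> K)" for c d
  have "P a b"
    using assms(1)
  proof (induction rule: Bolzano)
    case (trans c d f)
    then obtain M1 M2 where M12: "M1 < M" "M2 < M" "\<forall>x\<in>{c..d} \<inter> {a..b}. H x \<le> M1" "\<forall>x\<in>{d..f} \<inter> {a..b}. H x \<le> M2"
      unfolding P_def by blast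
    have "H x \<le> max M1 M2" if "x \<in> {c..f} \<inter> {a..b}" for x
    proof (cases "x \<le> d")
      case True
      then have "x \<in> {c..d} \<inter> {a..b}" using that by auto
      then have "H x \<le> M1" using M12(3) by blast
      then show ?thesis by simp
    next
      case False
      then have "x \<in> {d..f} \<inter> {a..b}" using that by auto
      then have "H x \<le> M2" using M12(4) by blast
      then show ?thesis by simp
    qed
    then show ?case unfolding P_def using M12 by (intro exI[of _ "max M1 M2"]) auto
  next
    case (local x)
    then have xin: "x \<in> {a..b}" by auto
    then have "(M - H x) / 2 > 0" using lt by auto
    then obtain d where d: "d > 0" "\<forall>y\<in>{a..b}. \<bar>y - x\<bar> < d \<longrightarrow> H y < H x + (M - H x) / 2"
      using assms(2) xin unfolding uscI_def by blast
    show ?case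
    proof (intro exI[of _ d] conjI allI impI)
      fix c f assume cxf: "c \<le> x \<and> x \<le> f \<and> f - c < d"
      have "H y \<le> H x + (M - H x) / 2" if "y \<in> {c..f} \<inter> {a..b}" for y
      proof -
        have "\<bar>y - x\<bar> < d" using that cxf by auto
        then show ?thesis using d(2) that by (meson IntE less_imp_le)
      qed
      moreover have "H x + (M - H x) / 2 < M" using lt[OF xin] by (simp add: field_simps)
      ultimately show "P c f" unfolding P_def by blast
    qed (use d in auto)
  qed
  then obtain K where K: "K < M" "\<forall>x\<in>{a..b}. H x \<le> K" unfolding P_def by auto
  have "M \<le> K" unfolding M_def using K assms(1) by (intro cSup_least) auto
  with K show False by simp
qed

lemma abs_sum_linear_near:
  fixes T :: "real set"
  assumes "finite T" "m \<notin> T"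
  shows "\<exists>r>0. \<exists>\<alpha> \<beta>. \<forall>s. \<bar>s - m\<bar> < r \<longrightarrow> (\<Sum>\<tau>\<in>T. \<bar>s - \<tau>\<bar>) = \<alpha> + \<beta> * s"
  using assms
proof (induction T rule: finite_induct)
  case empty
  have "\<forall>s. \<bar>s - m\<bar> < 1 \<longrightarrow> (\<Sum>\<tau>\<in>{}. \<bar>s - \<tau>\<bar>) = 0 + 0 * s" by simp
  then show ?case by (meson zero_less_one)
next
  case (insert t T)
  then obtain r \<alpha> \<beta> where r: "r > 0" "\<forall>s. \<bar>s - m\<bar> < r \<longrightarrow> (\<Sum>\<tau>\<in>T. \<bar>s - \<tau>\<bar>) = \<alpha> + \<beta> * s"
    by auto
  have tm: "t \<noteq> m" using insert by auto
  define r' where "r' = min r \<bar>t - m\<bar>"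
  have "r' > 0" using r tm unfolding r'_def by auto
  moreover have "\<forall>s. \<bar>s - m\<bar> < r' \<longrightarrow> (\<Sum>\<tau>\<in>insert t T. \<bar>s - \<tau>\<bar>) =
      (\<alpha> + sgn (m - t) * (- t)) + (\<beta> + sgn (m - t)) * s"
  proof (intro allI impI)
    fix s assume s: "\<bar>s - m\<bar> < r'"
    have "\<bar>s - t\<bar> = sgn (m - t) * (s - t)"
      using s tm unfolding r'_def by (cases "m < t") (auto simp: abs_if sgn_if)
    then show "(\<Sum>\<tau>\<in>insert t T. \<bar>s - \<tau>\<bar>) = (\<alpha> + sgn (m - t) * (- t)) + (\<beta> + sgn (m - t)) * s"
      using insert r s unfolding r'_def by (simp add: algebra_simps)
  qed
  ultimately show ?case by blast
qed


lemma convex_from_local: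
  fixes F :: "real \<Rightarrow> real" and D :: real and T :: "real set"
  assumes D: "D > 0" and T: "finite T" "T \<subseteq> {0<..<D}"
    and usc: "uscI {0..D} F"
    and edge: "\<And>m r a b c. m \<in> {0<..<D} \<Longrightarrow> m \<notin> T \<Longrightarrow> r > 0 \<Longrightarrow>
        (\<forall>s\<in>{0..D}. \<bar>s - m\<bar> < r \<longrightarrow> F s \<le> a + b * s + c * s\<^sup>2) \<Longrightarrow> F m = a + b * m + c * m\<^sup>2 \<Longrightarrow> c \<ge> 0"
    and kink: "\<And>m r \<eta> a b c. m \<in> T \<Longrightarrow> r > 0 \<Longrightarrow> \<eta> > 0 \<Longrightarrow>
        (\<forall>s\<in>{0..D}. \<bar>s - m\<bar> < r \<longrightarrow> F s \<le> a + b * s + c * s\<^sup>2 - \<eta> * \<bar>s - m\<bar>) \<Longrightarrow>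
        F m = a + b * m + c * m\<^sup>2 \<Longrightarrow> False"
    and s: "s \<in> {0..D}"
  shows "F s \<le> ((D - s) * F 0 + s * F D) / D"
proof (rule ccontr)
  assume nt: "\<not> ?thesis"
  define L where "L x = F 0 + (F D - F 0) * x / D" for x
  have Ls: "L s = ((D - s) * F 0 + s * F D) / D" unfolding L_def using D by (simp add: field_simps)
  define g0 where "g0 = F s - L s"
  have g0: "g0 > 0" using nt Ls unfolding g0_def by simp
  define \<epsilon> where "\<epsilon> = g0 / (2 * (D\<^sup>2 + 1))"
  have D1: "D\<^sup>2 + 1 > 0" by (rule add_nonneg_pos) simp_all
  then have D21: "2 * (D\<^sup>2 + 1) > 0" by simp
  have \<epsilon>: "\<epsilon> > 0" unfolding \<epsilon>_def using g0 D21 by (rule divide_pos_pos)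
  define w where "w x = (\<Sum>\<tau>\<in>T. \<bar>x - \<tau>\<bar>)" for x
  have w0: "w x \<ge> 0" for x unfolding w_def by (simp add: sum_nonneg)
  define W0 where "W0 = w 0 + w D + 1"
  have W0: "W0 > 0" unfolding W0_def using w0[of 0] w0[of D] by simp
  define \<eta> where "\<eta> = g0 / (4 * W0)"
  have \<eta>: "\<eta> > 0" unfolding \<eta>_def using g0 W0 by simp
  define R where "R x = - L x - \<epsilon> * x * (D - x) + \<eta> * w x" for x
  define H where "H x = F x + R x" for x
  have contR: "continuous_on {0..D} R"
    unfolding R_def L_def w_def by (intro continuous_intros) (use D in auto)
  have uscH: "uscI {0..D} H"
    unfolding uscI_def
  proof (intro ballI allI impI)
    fix x e assume x: "x \<in> {0..D}" and e: "(e::real) > 0"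
    obtain d1 where d1: "d1 > 0" "\<forall>y\<in>{0..D}. \<bar>y - x\<bar> < d1 \<longrightarrow> F y < F x + e / 2"
      using usc x e unfolding uscI_def by (meson half_gt_zero)
    obtain d2 where d2: "d2 > 0" "\<forall>y\<in>{0..D}. dist y x < d2 \<longrightarrow> dist (R y) (R x) < e / 2"
      using contR x e unfolding continuous_on_iff by (meson half_gt_zero)
    show "\<exists>d>0. \<forall>y\<in>{0..D}. \<bar>y - x\<bar> < d \<longrightarrow> H y < H x + e"
    proof (intro exI[of _ "min d1 d2"] conjI ballI impI)
      fix y assume y: "y \<in> {0..D}" "\<bar>y - x\<bar> < min d1 d2"
      then have "F y < F x + e / 2" "dist (R y) (R x) < e / 2" using d1 d2 by (auto simp: dist_real_def)
      then show "H y < H x + e" unfolding H_def dist_real_def by linarith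
    qed (use d1 d2 in auto)
  qed
  obtain m where m: "m \<in> {0..D}" "\<forall>x\<in>{0..D}. H x \<le> H m"
    using usc_max[OF _ uscH] D by auto
  have "\<epsilon> * s * (D - s) \<le> \<epsilon> * D\<^sup>2"
  proof -
    have "s * (D - s) \<le> D * D" using s by (intro mult_mono) auto
    then show ?thesis using \<epsilon> by (simp add: power2_eq_square mult.assoc)
  qed
  moreover have "\<epsilon> * D\<^sup>2 < g0 / 2"
  proof -
    have "\<epsilon> * D\<^sup>2 = g0 * D\<^sup>2 / (2 * (D\<^sup>2 + 1))" unfolding \<epsilon>_def by simp
    also have "\<dots> < g0 * (D\<^sup>2 + 1) / (2 * (D\<^sup>2 + 1))"
      using g0 D21 by (intro divide_strict_right_mono) auto
    also have "\<dots> = g0 / 2"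
    proof -
      have X: "D\<^sup>2 + 1 \<noteq> 0" using D1 by simp
      have gen: "\<And>a X::real. X \<noteq> 0 \<Longrightarrow> a * X / (2 * X) = a / 2" by simp
      show ?thesis using gen[OF X] by simp
    qed
    finally show ?thesis .
  qed
  moreover have "\<eta> * w s \<ge> 0" using \<eta> w0[of s] by simp
  ultimately have Hs: "H s > g0 / 2" unfolding H_def R_def g0_def
    using g0 unfolding g0_def
    by (smt (verit, best) field_sum_of_halves)
  have "\<eta> * w 0 < g0 / 4" "\<eta> * w D < g0 / 4"
  proof -
    have eW: "\<eta> * W0 = g0 / 4" unfolding \<eta>_def using W0 by simp
    have "w 0 < W0" "w D < W0" using w0[of 0] w0[of D] unfolding W0_def by simp_all
    then have "\<eta> * w 0 < \<eta> * W0" "\<eta> * w D < \<eta> * W0" using \<eta> by simp_all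
    then show "\<eta> * w 0 < g0 / 4" "\<eta> * w D < g0 / 4" using eW by simp_all
  qed
  then have "H 0 < g0 / 4" "H D < g0 / 4"
    unfolding H_def R_def L_def using D by simp_all
  moreover have "H s \<le> H m" using m(2) s by blast
  ultimately have "m \<noteq> 0" "m \<noteq> D" using Hs g0 by auto
  then have mD: "m \<in> {0<..<D}" using m(1) by auto
  have testF: "F x \<le> L x + \<epsilon> * x * (D - x) - \<eta> * w x + H m" if "x \<in> {0..D}" for x
  proof -
    have "H x \<le> H m" using m(2) that by blast
    then show ?thesis unfolding H_def R_def by linarith
  qed
  have testeq: "F m = L m + \<epsilon> * m * (D - m) - \<eta> * w m + H m"
    unfolding H_def R_def by simp
  show False
  proof (cases "m \<in> T")
    case False
    obtain r \<alpha> \<beta> where r: "r > 0" "\<forall>x. \<bar>x - m\<bar> < r \<longrightarrow> w x = \<alpha> + \<beta> * x"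
      using abs_sum_linear_near[OF T(1) False] unfolding w_def by blast
    define a where "a = F 0 - \<eta> * \<alpha> + H m"
    define b where "b = (F D - F 0) / D + \<epsilon> * D - \<eta> * \<beta>"
    have poly: "L x + \<epsilon> * x * (D - x) - \<eta> * (\<alpha> + \<beta> * x) + H m = a + b * x + (- \<epsilon>) * x\<^sup>2" for x
      unfolding a_def b_def L_def using D by (simp add: field_simps power2_eq_square)
    have "- \<epsilon> \<ge> 0"
    proof (rule edge[OF mD False r(1)])
      show "\<forall>x\<in>{0..D}. \<bar>x - m\<bar> < r \<longrightarrow> F x \<le> a + b * x + - \<epsilon> * x\<^sup>2"
      proof (intro ballI impI)
        fix x assume xin: "x \<in> {0..D}" and xr: "\<bar>x - m\<bar> < r"
        have "w x = \<alpha> + \<beta> * x" using r(2) xr by blast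
        then have "F x \<le> L x + \<epsilon> * x * (D - x) - \<eta> * (\<alpha> + \<beta> * x) + H m" using testF[OF xin] by simp
        then show "F x \<le> a + b * x + - \<epsilon> * x\<^sup>2" using poly[of x] by simp
      qed
      have "w m = \<alpha> + \<beta> * m" using r by simp
      then show "F m = a + b * m + - \<epsilon> * m\<^sup>2" using testeq poly[of m] by simp
    qed
    then show False using \<epsilon> by simp
  next
    case True
    have nT: "m \<notin> T - {m}" by simp
    obtain r \<alpha> \<beta> where r: "r > 0" "\<forall>x. \<bar>x - m\<bar> < r \<longrightarrow> (\<Sum>\<tau>\<in>T - {m}. \<bar>x - \<tau>\<bar>) = \<alpha> + \<beta> * x"
      using abs_sum_linear_near[OF _ nT] T(1) by blast
    have wsplit: "w x = \<bar>x - m\<bar> + (\<Sum>\<tau>\<in>T - {m}. \<bar>x - \<tau>\<bar>)" for x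
      unfolding w_def using True T(1) by (simp add: sum.remove)
    define a where "a = F 0 - \<eta> * \<alpha> + H m"
    define b where "b = (F D - F 0) / D + \<epsilon> * D - \<eta> * \<beta>"
    have poly: "L x + \<epsilon> * x * (D - x) - \<eta> * (\<bar>x - m\<bar> + (\<alpha> + \<beta> * x)) + H m
        = a + b * x + (- \<epsilon>) * x\<^sup>2 - \<eta> * \<bar>x - m\<bar>" for x
      unfolding a_def b_def L_def using D by (simp add: field_simps power2_eq_square)
    show False
    proof (rule kink[OF True r(1) \<eta>])
      show "\<forall>x\<in>{0..D}. \<bar>x - m\<bar> < r \<longrightarrow> F x \<le> a + b * x + - \<epsilon> * x\<^sup>2 - \<eta> * \<bar>x - m\<bar>"
      proof (intro ballI impI)
        fix x assume xin: "x \<in> {0..D}" and xr: "\<bar>x - m\<bar> < r"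
        have "w x = \<bar>x - m\<bar> + (\<alpha> + \<beta> * x)" using r(2) xr wsplit[of x] by simp
        then have "F x \<le> L x + \<epsilon> * x * (D - x) - \<eta> * (\<bar>x - m\<bar> + (\<alpha> + \<beta> * x)) + H m"
          using testF[OF xin] by simp
        then show "F x \<le> a + b * x + - \<epsilon> * x\<^sup>2 - \<eta> * \<bar>x - m\<bar>" using poly[of x] by simp
      qed
      have "w m = \<bar>m - m\<bar> + (\<alpha> + \<beta> * m)" using r wsplit[of m] by simp
      then have "F m = a + b * m + - \<epsilon> * m\<^sup>2 - \<eta> * \<bar>m - m\<bar>"
        using testeq poly[of m] by simp
      then show "F m = a + b * m + - \<epsilon> * m\<^sup>2" by simp
    qed
  qed
qed

fun crd :: "('v, 'e) gpoint \<Rightarrow> real" where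
  "crd (GV v) = 0"
| "crd (GE e t) = t"

lemma walk_cong: "walk G a b L \<Longrightarrow> L = L' \<Longrightarrow> walk G a b L'" by simp


locale mg =
  fixes G :: "('v, 'e) mgraph"
  assumes mg: "metric_graph G"
begin

lemma finV: "finite (mverts G)" and finE: "finite (medges G)" and Vne: "mverts G \<noteq> {}"
  using mg unfolding metric_graph_def by auto

lemma e_src: "e \<in> medges G \<Longrightarrow> esrc G e \<in> mverts G"
  and e_tgt: "e \<in> medges G \<Longrightarrow> etgt G e \<in> mverts G"
  and e_ne: "e \<in> medges G \<Longrightarrow> esrc G e \<noteq> etgt G e"
  and e_pos: "e \<in> medges G \<Longrightarrow> elen G e > 0"
  using mg unfolding metric_graph_def by auto

lemma simple: "e1 \<in> medges G \<Longrightarrow> e2 \<in> medges G \<Longrightarrow> {esrc G e1, etgt G e1} = {esrc G e2, etgt G e2} \<Longrightarrow> e1 = e2"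
  using mg unfolding metric_graph_def by blast

lemma deg: "v \<in> mverts G \<Longrightarrow> inc_edges G v \<noteq> {}"
  using mg unfolding metric_graph_def by auto

lemma conn: "a \<in> mverts G \<Longrightarrow> b \<in> mverts G \<Longrightarrow> (adjacent G)\<^sup>*\<^sup>* a b"
  using mg unfolding metric_graph_def by auto

lemma eaxiom: "e \<in> medges G \<Longrightarrow> s \<in> {0..elen G e} \<Longrightarrow> t \<in> {0..elen G e} \<Longrightarrow>
    gdist G (gpos G e s) (gpos G e t) = \<bar>s - t\<bar>"
  using mg unfolding metric_graph_def by auto

lemma Ene: "medges G \<noteq> {}"
  using Vne deg unfolding inc_edges_def by blast

definition ml where "ml = Min (elen G ` medges G)"

lemma ml_pos: "ml > 0"
  unfolding ml_def using finE Ene e_pos by (subst Min_gr_iff) auto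

lemma ml_le: "e \<in> medges G \<Longrightarrow> ml \<le> elen G e"
  unfolding ml_def using finE by (intro Min_le) auto

lemma walk_V: "walk G a b L \<Longrightarrow> a \<in> mverts G \<and> b \<in> mverts G"
  by (induction rule: walk.induct) (auto simp: e_src e_tgt)

lemma walk_nonneg: "walk G a b L \<Longrightarrow> L \<ge> 0"
  by (induction rule: walk.induct) (auto simp: e_pos add_pos_nonneg less_imp_le)

lemma walk_app: "walk G a b L1 \<Longrightarrow> walk G b c L2 \<Longrightarrow> walk G a c (L1 + L2)"
proof (induction arbitrary: L2 rule: walk.induct)
  case (walk_nil a)
  then show ?case by simp
next
  case (walk_fwd e b L)
  then show ?case using walk.walk_fwd[OF walk_fwd(1) walk_fwd(3)[OF walk_fwd(4)]]
    by (simp add: add.assoc)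
next
  case (walk_bwd e b L)
  then show ?case using walk.walk_bwd[OF walk_bwd(1) walk_bwd(3)[OF walk_bwd(4)]]
    by (simp add: add.assoc)
qed

lemma walk_edge1: "e \<in> medges G \<Longrightarrow> walk G (esrc G e) (etgt G e) (elen G e)"
  using walk.walk_fwd[OF _ walk_nil[of "etgt G e"]] e_tgt by simp

lemma walk_edge2: "e \<in> medges G \<Longrightarrow> walk G (etgt G e) (esrc G e) (elen G e)"
  using walk.walk_bwd[OF _ walk_nil[of "esrc G e"]] e_src by simp

lemma walk_rev: "walk G a b L \<Longrightarrow> walk G b a L"
proof (induction rule: walk.induct)
  case (walk_nil a)
  then show ?case by (rule walk.walk_nil)
next
  case (walk_fwd e b L)
  then show ?case using walk_app[OF walk_fwd(3) walk_edge2[OF walk_fwd(1)]] by (simp add: add.commute)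
next
  case (walk_bwd e b L)
  then show ?case using walk_app[OF walk_bwd(3) walk_edge1[OF walk_bwd(1)]] by (simp add: add.commute)
qed

lemma walk_ge_ml: "walk G a b L \<Longrightarrow> a \<noteq> b \<Longrightarrow> ml \<le> L"
proof (induction rule: walk.induct)
  case (walk_fwd e b L)
  then show ?case using ml_le[OF walk_fwd(1)] walk_nonneg[OF walk_fwd(2)] by simp
next
  case (walk_bwd e b L)
  then show ?case using ml_le[OF walk_bwd(1)] walk_nonneg[OF walk_bwd(2)] by simp
qed simp

lemma walk_exists: "a \<in> mverts G \<Longrightarrow> b \<in> mverts G \<Longrightarrow> \<exists>L. walk G a b L"
proof -
  assume a: "a \<in> mverts G" and b: "b \<in> mverts G"
  have "(adjacent G)\<^sup>*\<^sup>* a b" using conn[OF a b] .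
  then show ?thesis
  proof (induction rule: rtranclp_induct)
    case base
    then show ?case using walk_nil[OF a] by blast
  next
    case (step y z)
    then obtain L where L: "walk G a y L" by blast
    from step(2) obtain e where e: "e \<in> medges G" "{y, z} = {esrc G e, etgt G e}"
      unfolding adjacent_def by blast
    then have "(y = esrc G e \<and> z = etgt G e) \<or> (y = etgt G e \<and> z = esrc G e)"
      by (auto simp: doubleton_eq_iff)
    then show ?case
    proof
      assume "y = esrc G e \<and> z = etgt G e"
      then show ?thesis using walk_app[OF _ walk_edge1[OF e(1)], of a L] L by auto
    next
      assume "y = etgt G e \<and> z = esrc G e"
      then show ?thesis using walk_app[OF _ walk_edge2[OF e(1)], of a L] L by auto
    qed
  qed
qed

lemma walk_list: "walk G a b L \<Longrightarrow>
   \<exists>es. set es \<subseteq> medges G \<and> L = sum_list (map (elen G) es) \<and> real (length es) * ml \<le> L"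
proof (induction rule: walk.induct)
  case (walk_nil a)
  then show ?case by (intro exI[of _ "[]"]) simp
next
  case (walk_fwd e b L)
  then obtain es where "set es \<subseteq> medges G" "L = sum_list (map (elen G) es)" "real (length es) * ml \<le> L"
    by blast
  then show ?case using ml_le[OF walk_fwd(1)] walk_fwd(1)
    by (intro exI[of _ "e # es"]) (auto simp: algebra_simps)
next
  case (walk_bwd e b L)
  then obtain es where "set es \<subseteq> medges G" "L = sum_list (map (elen G) es)" "real (length es) * ml \<le> L"
    by blast
  then show ?case using ml_le[OF walk_bwd(1)] walk_bwd(1)
    by (intro exI[of _ "e # es"]) (auto simp: algebra_simps)
qed

lemma vdist_attained:
  assumes a: "a \<in> mverts G" and b: "b \<in> mverts G"
  shows "walk G a b (vdist G a b) \<and> (\<forall>L. walk G a b L \<longrightarrow> vdist G a b \<le> L)"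
proof -
  obtain L0 where L0: "walk G a b L0" using walk_exists[OF a b] by blast
  define S where "S = {L. walk G a b L}"
  define S' where "S' = {L\<in>S. L \<le> L0}"
  define N where "N = nat \<lceil>L0 / ml\<rceil>"
  have "S' \<subseteq> (\<lambda>es. sum_list (map (elen G) es)) ` {es. set es \<subseteq> medges G \<and> length es \<le> N}"
  proof
    fix L assume "L \<in> S'"
    then have L: "walk G a b L" "L \<le> L0" unfolding S'_def S_def by auto
    obtain es where es: "set es \<subseteq> medges G" "L = sum_list (map (elen G) es)" "real (length es) * ml \<le> L"
      using walk_list[OF L(1)] by blast
    have "real (length es) \<le> L0 / ml" using es(3) L(2) ml_pos by (simp add: field_simps)
    also have "\<dots> \<le> real_of_int \<lceil>L0 / ml\<rceil>" by simp
    finally have "int (length es) \<le> \<lceil>L0 / ml\<rceil>" by linarith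
    then have "length es \<le> N" unfolding N_def by linarith
    then show "L \<in> (\<lambda>es. sum_list (map (elen G) es)) ` {es. set es \<subseteq> medges G \<and> length es \<le> N}"
      using es by blast
  qed
  then have finS': "finite S'" using finite_lists_length_le[OF finE] by (rule finite_subset[OF _ finite_imageI])
  have "L0 \<in> S'" unfolding S'_def S_def using L0 by simp
  then have ne: "S' \<noteq> {}" by blast
  define m where "m = Min S'"
  have mS': "m \<in> S'" unfolding m_def using finS' ne by simp
  have mle: "m \<le> L" if "L \<in> S" for L
  proof (cases "L \<le> L0")
    case True
    then show ?thesis unfolding m_def using finS' that S'_def by (intro Min_le) auto
  next
    case False
    have "m \<le> L0" using mS' unfolding S'_def by simp
    then show ?thesis using False by simp
  qed
  have "Inf S = m" using mS' mle unfolding S'_def by (intro cInf_eq_minimum) auto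
  then have "vdist G a b = m" unfolding vdist_def S_def by simp
  then show ?thesis using mS' mle unfolding S'_def S_def by auto
qed

lemma vdist_walk: "a \<in> mverts G \<Longrightarrow> b \<in> mverts G \<Longrightarrow> walk G a b (vdist G a b)"
  using vdist_attained by blast

lemma vdist_le: "walk G a b L \<Longrightarrow> vdist G a b \<le> L"
  using vdist_attained walk_V by blast

lemma vdist_nonneg: "a \<in> mverts G \<Longrightarrow> b \<in> mverts G \<Longrightarrow> vdist G a b \<ge> 0"
  using walk_nonneg[OF vdist_walk] by blast

lemma vdist_refl: "a \<in> mverts G \<Longrightarrow> vdist G a a = 0"
  using vdist_le[OF walk_nil[of a]] vdist_nonneg[of a a] by simp

lemma vdist_tri: "a \<in> mverts G \<Longrightarrow> b \<in> mverts G \<Longrightarrow> c \<in> mverts G \<Longrightarrow>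
    vdist G a c \<le> vdist G a b + vdist G b c"
  using vdist_le[OF walk_app[OF vdist_walk vdist_walk]] by blast

lemma vdist_sym: "vdist G a b = vdist G b a"
proof -
  have "{L. walk G a b L} = {L. walk G b a L}" using walk_rev by blast
  then show ?thesis unfolding vdist_def by simp
qed

lemma vdist_edge1: "e \<in> medges G \<Longrightarrow> vdist G (esrc G e) (etgt G e) \<le> elen G e"
  using vdist_le[OF walk_edge1] .

lemma vdist_edge2: "e \<in> medges G \<Longrightarrow> vdist G (etgt G e) (esrc G e) \<le> elen G e"
  using vdist_le[OF walk_edge2] .

lemma vdist_ml: "a \<in> mverts G \<Longrightarrow> b \<in> mverts G \<Longrightarrow> a \<noteq> b \<Longrightarrow> ml \<le> vdist G a b"
  using walk_ge_ml[OF vdist_walk] by blast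

end

definition gS :: "('v, 'e) mgraph \<Rightarrow> ('v, 'e) gpoint \<Rightarrow> ('v, 'e) gpoint \<Rightarrow> real set" where
  "gS G p q = ({a + vdist G x y + b | x a y b. (x, a) \<in> anch G p \<and> (y, b) \<in> anch G q}
      \<union> {\<bar>s - t\<bar> | e s t. e \<in> medges G \<and> s \<in> {0..elen G e} \<and> t \<in> {0..elen G e}
            \<and> p = gpos G e s \<and> q = gpos G e t})"

lemma gdist_gS: "gdist G p q = Inf (gS G p q)"
  unfolding gdist_def gS_def ..

definition cv :: "('v, 'e) mgraph \<Rightarrow> 'e \<Rightarrow> 'v \<Rightarrow> real" where
  "cv G e v = (if v = esrc G e then 0 else elen G e)"

lemma anch_fin: "finite (anch G p)" by (cases p) auto
lemma anch_ne: "anch G p \<noteq> {}" by (cases p) auto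

context mg begin

lemma gpos_src[simp]: "gpos G e 0 = GV (esrc G e)" unfolding gpos_def by simp

lemma gpos_tgt: "e \<in> medges G \<Longrightarrow> gpos G e (elen G e) = GV (etgt G e)"
  using e_pos[of e] unfolding gpos_def by simp

lemma gpos_int: "0 < s \<Longrightarrow> s < elen G e \<Longrightarrow> gpos G e s = GE e s"
  unfolding gpos_def by simp

lemma gpos_in: "e \<in> medges G \<Longrightarrow> s \<in> {0..elen G e} \<Longrightarrow> gpos G e s \<in> gpoints G"
  unfolding gpos_def gpoints_def using e_src e_tgt by auto

lemma gpos_eq_GE: "gpos G e s = GE e' t \<Longrightarrow> e' = e \<and> t = s \<and> s \<noteq> 0 \<and> s \<noteq> elen G e"
  unfolding gpos_def by (auto split: if_splits)

lemma gpos_eq_GV: "e \<in> medges G \<Longrightarrow> gpos G e s = GV v \<Longrightarrow>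
    (s = 0 \<and> v = esrc G e) \<or> (s = elen G e \<and> v = etgt G e)"
  unfolding gpos_def by (auto split: if_splits)

lemma gpos_inj: "e \<in> medges G \<Longrightarrow> gpos G e s = gpos G e t \<Longrightarrow> s = t"
  using e_ne[of e] e_pos[of e] unfolding gpos_def by (auto split: if_splits)

lemma gpos_two: "e \<in> medges G \<Longrightarrow> e' \<in> medges G \<Longrightarrow> e \<noteq> e' \<Longrightarrow> gpos G e s = gpos G e' t \<Longrightarrow>
    \<exists>v. gpos G e s = GV v"
  by (metis gpoint.exhaust gpos_eq_GE)

lemma cv_gpos: "e \<in> medges G \<Longrightarrow> v = esrc G e \<or> v = etgt G e \<Longrightarrow> gpos G e (cv G e v) = GV v"
  unfolding cv_def using gpos_tgt by auto

lemma cv_range: "cv G e v \<in> {0..elen G e}" if "e \<in> medges G"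
  unfolding cv_def using e_pos[OF that] by auto

lemma anch_gpos:
  assumes e: "e \<in> medges G" and c: "c \<in> {0..elen G e}" and w: "(w0, b) \<in> anch G (gpos G e c)"
  shows "(w0 = esrc G e \<or> w0 = etgt G e) \<and> b = \<bar>c - cv G e w0\<bar>"
proof -
  have ne: "esrc G e \<noteq> etgt G e" using e_ne[OF e] .
  consider "c = 0" | "c = elen G e" | "0 < c \<and> c < elen G e" using c by fastforce
  then show ?thesis
  proof cases
    case 1 then show ?thesis using w by (auto simp: cv_def)
  next
    case 2 then show ?thesis using w ne gpos_tgt[OF e] by (auto simp: cv_def)
  next
    case 3 then show ?thesis using w ne gpos_int[of c e] by (auto simp: cv_def)
  qed
qed

lemma anch_V: "p \<in> gpoints G \<Longrightarrow> (x0, a) \<in> anch G p \<Longrightarrow> x0 \<in> mverts G \<and> 0 \<le> a"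
  unfolding gpoints_def using e_src e_tgt by auto

lemma anch_at:
  assumes e: "e \<in> medges G" and c: "c \<in> {0..elen G e}" and v: "v = esrc G e \<or> v = etgt G e"
  shows "\<exists>x0 a. (x0, a) \<in> anch G (gpos G e c) \<and> a + vdist G x0 v \<le> \<bar>c - cv G e v\<bar>"
proof -
  have ne: "esrc G e \<noteq> etgt G e" using e_ne[OF e] .
  have vV: "v \<in> mverts G" using v e_src[OF e] e_tgt[OF e] by auto
  consider "c = 0" | "c = elen G e" | "0 < c \<and> c < elen G e" using c by fastforce
  then show ?thesis
  proof cases
    case 1
    show ?thesis
    proof (cases "v = esrc G e")
      case True then show ?thesis using 1 vV vdist_refl by (intro exI[of _ v] exI[of _ 0]) (auto simp: cv_def)
    next
      case False
      then have "v = etgt G e" using v by auto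
      then show ?thesis using 1 vdist_edge1[OF e] ne
        by (intro exI[of _ "esrc G e"] exI[of _ 0]) (auto simp: cv_def)
    qed
  next
    case 2
    show ?thesis
    proof (cases "v = etgt G e")
      case True then show ?thesis using 2 vV vdist_refl ne gpos_tgt[OF e]
        by (intro exI[of _ v] exI[of _ 0]) (auto simp: cv_def)
    next
      case False
      then have "v = esrc G e" using v by auto
      then show ?thesis using 2 vdist_edge2[OF e] ne gpos_tgt[OF e] e_pos[OF e]
        by (intro exI[of _ "etgt G e"] exI[of _ 0]) (auto simp: cv_def)
    qed
  next
    case 3
    then have g: "gpos G e c = GE e c" using gpos_int by simp
    show ?thesis
    proof (cases "v = esrc G e")
      case True then show ?thesis using 3 g vV vdist_refl
        by (intro exI[of _ v] exI[of _ c]) (auto simp: cv_def)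
    next
      case False
      then have "v = etgt G e" using v by auto
      then show ?thesis using 3 g vV vdist_refl ne
        by (intro exI[of _ v] exI[of _ "elen G e - c"]) (auto simp: cv_def)
    qed
  qed
qed

lemma gS_fin: "finite (gS G p q)"
proof -
  have A: "{a + vdist G x y + b | x a y b. (x, a) \<in> anch G p \<and> (y, b) \<in> anch G q}
      = (\<lambda>((x, a), (y, b)). a + vdist G x y + b) ` (anch G p \<times> anch G q)"
    by force
  define C where "C r = insert 0 (insert (crd r) (elen G ` medges G))" for r :: "('v, 'e) gpoint"
  have Cin: "s \<in> C r" if "e \<in> medges G" "r = gpos G e s" for e s r
  proof (cases "s = 0 \<or> s = elen G e")
    case True then show ?thesis unfolding C_def using that by auto
  next
    case False
    then have "r = GE e s" using that unfolding gpos_def by auto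
    then show ?thesis unfolding C_def by simp
  qed
  have B: "{\<bar>s - t\<bar> | e s t. e \<in> medges G \<and> s \<in> {0..elen G e} \<and> t \<in> {0..elen G e}
            \<and> p = gpos G e s \<and> q = gpos G e t} \<subseteq> (\<lambda>(e, s, t). \<bar>s - t\<bar>) ` (medges G \<times> C p \<times> C q)"
  proof
    fix z assume "z \<in> {\<bar>s - t\<bar> | e s t. e \<in> medges G \<and> s \<in> {0..elen G e} \<and> t \<in> {0..elen G e}
            \<and> p = gpos G e s \<and> q = gpos G e t}"
    then obtain e s t where est: "z = \<bar>s - t\<bar>" "e \<in> medges G" "p = gpos G e s" "q = gpos G e t" by blast
    then have "(e, s, t) \<in> medges G \<times> C p \<times> C q" using Cin by blast
    then show "z \<in> (\<lambda>(e, s, t). \<bar>s - t\<bar>) ` (medges G \<times> C p \<times> C q)" using est(1) by force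
  qed
  have "finite (C r)" for r unfolding C_def using finE by simp
  then show ?thesis unfolding gS_def A using anch_fin finE
    by (intro finite_UnI finite_imageI finite_cartesian_product finite_subset[OF B]) auto
qed

lemma gS_ne: "gS G p q \<noteq> {}"
proof -
  obtain xa where xa: "xa \<in> anch G p" using anch_ne[of G p] by blast
  obtain yb where yb: "yb \<in> anch G q" using anch_ne[of G q] by blast
  have "snd xa + vdist G (fst xa) (fst yb) + snd yb \<in> gS G p q"
    unfolding gS_def using xa yb by (intro UnI1 CollectI exI[of _ "fst xa"] exI[of _ "snd xa"] exI[of _ "fst yb"] exI[of _ "snd yb"]) simp
  then show ?thesis by blast
qed

lemma gdist_in: "gdist G p q \<in> gS G p q"
  unfolding gdist_gS using gS_fin gS_ne by (simp add: cInf_eq_Min)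

lemma gdist_le: "z \<in> gS G p q \<Longrightarrow> gdist G p q \<le> z"
  unfolding gdist_gS using gS_fin by (intro cInf_lower) (auto intro: bdd_below_finite)

lemma gdist_le_anch: "(x, a) \<in> anch G p \<Longrightarrow> (y, b) \<in> anch G q \<Longrightarrow> gdist G p q \<le> a + vdist G x y + b"
  by (rule gdist_le) (auto simp: gS_def)

lemma gdist_le_edge: "e \<in> medges G \<Longrightarrow> s \<in> {0..elen G e} \<Longrightarrow> t \<in> {0..elen G e} \<Longrightarrow>
    p = gpos G e s \<Longrightarrow> q = gpos G e t \<Longrightarrow> gdist G p q \<le> \<bar>s - t\<bar>"
  by (rule gdist_le, unfold gS_def, rule UnI2) blast

lemma gdist_cases:
  obtains x a y b where "(x, a) \<in> anch G p" "(y, b) \<in> anch G q" "gdist G p q = a + vdist G x y + b"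
  | e s t where "e \<in> medges G" "s \<in> {0..elen G e}" "t \<in> {0..elen G e}" "p = gpos G e s" "q = gpos G e t"
     "gdist G p q = \<bar>s - t\<bar>"
  using gdist_in[of p q] unfolding gS_def by blast

lemma gdist_sym: "gdist G p q = gdist G q p"
proof -
  have sub: "gS G p' q' \<subseteq> gS G q' p'" for p' q'
  proof
    fix z assume "z \<in> gS G p' q'"
    then consider (A) x a y b where "(x, a) \<in> anch G p'" "(y, b) \<in> anch G q'" "z = a + vdist G x y + b"
      | (B) e s t where "e \<in> medges G" "s \<in> {0..elen G e}" "t \<in> {0..elen G e}" "p' = gpos G e s" "q' = gpos G e t" "z = \<bar>s - t\<bar>"
      unfolding gS_def by blast
    then show "z \<in> gS G q' p'"
    proof cases
      case A
      then have "z = b + vdist G y x + a" using vdist_sym[of x y] by simp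
      then show ?thesis unfolding gS_def using A(1,2) by blast
    next
      case B
      then have "z = \<bar>t - s\<bar>" by (simp add: abs_minus_commute)
      then show ?thesis unfolding gS_def using B(1-5) by blast
    qed
  qed
  have "gS G p q = gS G q p" using sub[of p q] sub[of q p] by blast
  then show ?thesis unfolding gdist_gS by simp
qed

lemma gpoint_on_edge: "p \<in> gpoints G \<Longrightarrow> \<exists>e s. e \<in> medges G \<and> s \<in> {0..elen G e} \<and> p = gpos G e s"
proof -
  assume p: "p \<in> gpoints G"
  show ?thesis
  proof (cases p)
    case (GV v)
    then have "v \<in> mverts G" using p unfolding gpoints_def by auto
    then obtain e where e: "e \<in> medges G" "esrc G e = v \<or> etgt G e = v"
      using deg unfolding inc_edges_def by blast
    then show ?thesis using GV cv_gpos[OF e(1), of v] cv_range[OF e(1), of v] by metis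
  next
    case (GE e t)
    then have "e \<in> medges G" "0 < t" "t < elen G e" using p unfolding gpoints_def by auto
    then show ?thesis using GE gpos_int by (intro exI[of _ e] exI[of _ t]) auto
  qed
qed

lemma gdist_self: "p \<in> gpoints G \<Longrightarrow> gdist G p p = 0"
  using gpoint_on_edge eaxiom by fastforce

lemma gdist_nonneg: "p \<in> gpoints G \<Longrightarrow> q \<in> gpoints G \<Longrightarrow> gdist G p q \<ge> 0"
proof -
  assume p: "p \<in> gpoints G" and q: "q \<in> gpoints G"
  show ?thesis
  proof (cases rule: gdist_cases[of p q])
    case (1 x a y b)
    then show ?thesis using anch_V[OF p 1(1)] anch_V[OF q 1(2)] vdist_nonneg by fastforce
  qed simp
qed

lemma gdist_step:
  assumes e: "e \<in> medges G" and c0: "c0 \<in> {0..elen G e}" and c1: "c1 \<in> {0..elen G e}"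
    and y: "y \<in> gpoints G"
  shows "gdist G (gpos G e c0) y \<le> \<bar>c0 - c1\<bar> + gdist G (gpos G e c1) y"
proof -
  let ?x = "gpos G e c0" and ?w = "gpos G e c1"
  have xg: "?x \<in> gpoints G" using gpos_in[OF e c0] .
  show ?thesis
  proof (cases rule: gdist_cases[of ?w y])
    case (1 w0 b y0 b')
    from anch_gpos[OF e c1 1(1)] have w0: "w0 = esrc G e \<or> w0 = etgt G e" "b = \<bar>c1 - cv G e w0\<bar>" by auto
    obtain x0 a where xa: "(x0, a) \<in> anch G ?x" "a + vdist G x0 w0 \<le> \<bar>c0 - cv G e w0\<bar>"
      using anch_at[OF e c0 w0(1)] by blast
    have V: "x0 \<in> mverts G" "w0 \<in> mverts G" "y0 \<in> mverts G"
      using anch_V[OF xg xa(1)] anch_V[OF y 1(2)] w0 e_src[OF e] e_tgt[OF e] by auto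
    have "gdist G ?x y \<le> a + vdist G x0 y0 + b'" using gdist_le_anch[OF xa(1) 1(2)] .
    also have "\<dots> \<le> a + vdist G x0 w0 + vdist G w0 y0 + b'" using vdist_tri[OF V] by simp
    also have "\<dots> \<le> \<bar>c0 - c1\<bar> + gdist G ?w y" using xa(2) w0(2) 1(3) by linarith
    finally show ?thesis .
  next
    case (2 e' s t)
    show ?thesis
    proof (cases "e' = e")
      case True
      then have "s = c1" using gpos_inj[OF e] 2 by simp
      then have "gdist G ?x y \<le> \<bar>c0 - t\<bar>" using gdist_le_edge[OF e c0, of t] 2 True by simp
      then show ?thesis using 2 \<open>s = c1\<close> by linarith
    next
      case False
      obtain v where v: "?w = GV v" using gpos_two[OF e 2(1)] False 2(4) by metis
      have v1: "(c1 = 0 \<and> v = esrc G e) \<or> (c1 = elen G e \<and> v = etgt G e)" using gpos_eq_GV[OF e v] .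
      have v2: "(s = 0 \<and> v = esrc G e') \<or> (s = elen G e' \<and> v = etgt G e')" using gpos_eq_GV[OF 2(1)] v 2(4) by simp
      have c1v: "c1 = cv G e v" using v1 e_ne[OF e] unfolding cv_def by auto
      have sv: "s = cv G e' v" using v2 e_ne[OF 2(1)] unfolding cv_def by auto
      obtain x0 a where xa: "(x0, a) \<in> anch G ?x" "a + vdist G x0 v \<le> \<bar>c0 - cv G e v\<bar>"
        using anch_at[OF e c0, of v] v1 by blast
      obtain y0 b where yb: "(y0, b) \<in> anch G (gpos G e' t)" "b + vdist G y0 v \<le> \<bar>t - cv G e' v\<bar>"
        using anch_at[OF 2(1) 2(3), of v] v2 by blast
      have V: "x0 \<in> mverts G" "v \<in> mverts G" "y0 \<in> mverts G"
        using anch_V[OF xg xa(1)] anch_V[OF y, of y0 b] yb(1) 2(5) v1 e_src[OF e] e_tgt[OF e] by auto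
      have "gdist G ?x y \<le> a + vdist G x0 y0 + b" using gdist_le_anch[OF xa(1)] yb(1) 2(5) by simp
      also have "\<dots> \<le> a + vdist G x0 v + vdist G v y0 + b" using vdist_tri[OF V] by simp
      also have "\<dots> \<le> \<bar>c0 - c1\<bar> + gdist G ?w y"
        using xa(2) yb(2) 2(6) c1v sv vdist_sym[of v y0] by (simp add: abs_minus_commute)
      finally show ?thesis .
    qed
  qed
qed

end

type_synonym 'e seg = "'e \<times> real \<times> real"

fun spath :: "('v, 'e) mgraph \<Rightarrow> ('v, 'e) gpoint \<Rightarrow> 'e seg list \<Rightarrow> ('v, 'e) gpoint \<Rightarrow> bool" where
  "spath G x [] y = (x = y)"
| "spath G x ((e, a, b) # P) y = (e \<in> medges G \<and> a \<in> {0..elen G e} \<and> b \<in> {0..elen G e} \<and>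
      x = gpos G e a \<and> spath G (gpos G e b) P y)"

fun cost :: "'e seg list \<Rightarrow> real" where
  "cost [] = 0"
| "cost ((e, a, b) # P) = \<bar>b - a\<bar> + cost P"

fun gam :: "('v, 'e) mgraph \<Rightarrow> ('v, 'e) gpoint \<Rightarrow> 'e seg list \<Rightarrow> real \<Rightarrow> ('v, 'e) gpoint" where
  "gam G x [] s = x"
| "gam G x ((e, a, b) # P) s = (if s \<le> \<bar>b - a\<bar> then gpos G e (a + sgn (b - a) * s)
      else gam G (gpos G e b) P (s - \<bar>b - a\<bar>))"

definition nz :: "'e seg \<Rightarrow> bool" where "nz sg = (fst (snd sg) \<noteq> snd (snd sg))"

definition slen :: "'e seg \<Rightarrow> real" where "slen sg = \<bar>snd (snd sg) - fst (snd sg)\<bar>"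

lemma cost_app: "cost (P @ Q) = cost P + cost Q"
  by (induction P rule: cost.induct) auto

lemma cost_nonneg: "cost P \<ge> 0"
  by (induction P rule: cost.induct) auto

lemma cost_take_Suc: "j < length P \<Longrightarrow> cost (take (Suc j) P) = cost (take j P) + slen (P ! j)"
proof (induction P arbitrary: j rule: cost.induct)
  case (2 e a b P)
  then show ?case by (cases j) (auto simp: slen_def)
qed simp

lemma cost_take_le: "j \<le> k \<Longrightarrow> cost (take j P) \<le> cost (take k P)"
proof (induction P arbitrary: j k rule: cost.induct)
  case (2 e a b P)
  then show ?case by (cases j; cases k) (auto simp: cost_nonneg)
qed simp

lemma cost_take_all: "cost (take (length P) P) = cost P" by simp

lemma spath_app: "spath G x P w \<Longrightarrow> spath G w Q y \<Longrightarrow> spath G x (P @ Q) y"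
  by (induction G x P w rule: spath.induct) auto

lemma spath_app_iff: "spath G x (P @ Q) y \<longleftrightarrow> (\<exists>w. spath G x P w \<and> spath G w Q y)"
  by (induction G x P y rule: spath.induct) auto

lemma spath_filter: "spath G x P y \<Longrightarrow> spath G x (filter nz P) y"
  by (induction G x P y rule: spath.induct) (auto simp: nz_def)

lemma cost_filter: "cost (filter nz P) = cost P"
  by (induction P rule: cost.induct) (auto simp: nz_def)

lemma sgn_abs_cancel: "a + sgn (b - a) * \<bar>b - a\<bar> = (b::real)"
  by (cases "a < b"; cases "a = b") (auto simp: sgn_if)

lemma gam_zero: "spath G x P y \<Longrightarrow> gam G x P 0 = x"
  by (cases "(G, x, P, y)" rule: spath.cases) auto

lemma gam_end: "spath G x P y \<Longrightarrow> gam G x P (cost P) = y"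
proof (induction G x P y rule: spath.induct)
  case (2 G x e a b P y)
  show ?case
  proof (cases "cost P = 0")
    case True
    then have "y = gpos G e b" using 2 gam_zero[of G "gpos G e b" P y] by auto
    then show ?thesis using True by (simp add: sgn_abs_cancel)
  next
    case False
    then have "cost P > 0" using cost_nonneg[of P] by simp
    then show ?thesis using 2 by simp
  qed
qed simp

lemma seg_between:
  fixes a b d l :: real
  assumes "a \<in> {0..l}" "b \<in> {0..l}" "0 \<le> d" "d \<le> \<bar>b - a\<bar>"
  shows "a + sgn (b - a) * d \<in> {0..l}"
  using assms by (cases "a < b"; cases "a = b") (auto simp: sgn_if)

lemma gam_seg:
  assumes "spath G x P y" "j < length P" "P ! j = (e, a, b)"
    "cost (take j P) \<le> s" "s \<le> cost (take j P) + \<bar>b - a\<bar>"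
  shows "gam G x P s = gpos G e (a + sgn (b - a) * (s - cost (take j P)))"
  using assms
proof (induction G x P y arbitrary: j s rule: spath.induct)
  case (1 G x y)
  then show ?case by simp
next
  case (2 G x e0 a0 b0 P y)
  show ?case
  proof (cases j)
    case 0
    then show ?thesis using 2 by simp
  next
    case (Suc j')
    have j': "j' < length P" "P ! j' = (e, a, b)" using 2 Suc by auto
    have tau: "cost (take j ((e0, a0, b0) # P)) = \<bar>b0 - a0\<bar> + cost (take j' P)" using Suc by simp
    have ge: "s - \<bar>b0 - a0\<bar> \<ge> cost (take j' P)" using 2(5) tau by simp
    have le: "s - \<bar>b0 - a0\<bar> \<le> cost (take j' P) + \<bar>b - a\<bar>" using 2(6) tau by simp
    have sp: "spath G (gpos G e0 b0) P y" using 2(2) by simp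
    have IH: "gam G (gpos G e0 b0) P (s - \<bar>b0 - a0\<bar>) =
        gpos G e (a + sgn (b - a) * (s - \<bar>b0 - a0\<bar> - cost (take j' P)))"
      using 2(1)[OF sp j'(1) j'(2) ge le] by simp
    show ?thesis
    proof (cases "s \<le> \<bar>b0 - a0\<bar>")
      case True
      then have "s = \<bar>b0 - a0\<bar>" "cost (take j' P) = 0" using ge cost_nonneg[of "take j' P"] by linarith+
      then have "gam G (gpos G e0 b0) P (s - \<bar>b0 - a0\<bar>) = gpos G e0 b0"
        using gam_zero[of G "gpos G e0 b0" P y] 2(2) by simp
      then show ?thesis using True IH tau \<open>s = _\<close> by (simp add: sgn_abs_cancel)
    next
      case False
      have "gam G x ((e0, a0, b0) # P) s = gam G (gpos G e0 b0) P (s - \<bar>b0 - a0\<bar>)" using False by simp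
      also have "\<dots> = gpos G e (a + sgn (b - a) * (s - \<bar>b0 - a0\<bar> - cost (take j' P)))" using IH .
      also have "\<dots> = gpos G e (a + sgn (b - a) * (s - cost (take j ((e0, a0, b0) # P))))"
        unfolding tau by (simp add: algebra_simps)
      finally show ?thesis .
    qed
  qed
qed

lemma gam_cover:
  assumes "P \<noteq> []" "0 \<le> s" "s \<le> cost P"
  shows "\<exists>j<length P. cost (take j P) \<le> s \<and> s \<le> cost (take (Suc j) P)"
  using assms
proof (induction P arbitrary: s rule: cost.induct)
  case 1
  then show ?case by simp
next
  case (2 e a b P)
  show ?case
  proof (cases "s \<le> \<bar>b - a\<bar> \<or> P = []")
    case True
    then show ?thesis using 2 by (intro exI[of _ 0]) auto
  next
    case False
    then obtain j where "j < length P" "cost (take j P) \<le> s - \<bar>b - a\<bar>" "s - \<bar>b - a\<bar> \<le> cost (take (Suc j) P)"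
      using 2(1)[of "s - \<bar>b - a\<bar>"] 2(4) by auto
    then show ?thesis by (intro exI[of _ "Suc j"]) auto
  qed
qed

context mg begin

lemma lemmaI: "spath G x P y \<Longrightarrow> y \<in> gpoints G \<Longrightarrow> gdist G x y \<le> cost P"
proof (induction P arbitrary: x)
  case Nil
  then show ?case using gdist_self by simp
next
  case (Cons sg P)
  obtain e a b where sg: "sg = (e, a, b)" by (cases sg) auto
  then have h: "e \<in> medges G" "a \<in> {0..elen G e}" "b \<in> {0..elen G e}" "x = gpos G e a" "spath G (gpos G e b) P y"
    using Cons(2) by auto
  then have "gdist G (gpos G e b) y \<le> cost P" using Cons by simp
  moreover have "gdist G (gpos G e a) y \<le> \<bar>a - b\<bar> + gdist G (gpos G e b) y"
    using h Cons(3) by (intro gdist_step) auto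
  ultimately show ?case using h sg by (simp add: abs_minus_commute)
qed

lemma walk_path: "walk G a b L \<Longrightarrow> \<exists>P. spath G (GV a) P (GV b) \<and> cost P = L"
proof (induction rule: walk.induct)
  case (walk_nil a)
  then show ?case by (intro exI[of _ "[]"]) simp
next
  case (walk_fwd e b L)
  then obtain P where "spath G (GV (etgt G e)) P (GV b)" "cost P = L" by blast
  then show ?case using walk_fwd(1) gpos_tgt[OF walk_fwd(1)] e_pos[OF walk_fwd(1)]
    by (intro exI[of _ "(e, 0, elen G e) # P"]) auto
next
  case (walk_bwd e b L)
  then obtain P where "spath G (GV (esrc G e)) P (GV b)" "cost P = L" by blast
  then show ?case using walk_bwd(1) gpos_tgt[OF walk_bwd(1)] e_pos[OF walk_bwd(1)]
    by (intro exI[of _ "(e, elen G e, 0) # P"]) auto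
qed

lemma anch_path1: "x \<in> gpoints G \<Longrightarrow> (x0, a) \<in> anch G x \<Longrightarrow> \<exists>P. spath G x P (GV x0) \<and> cost P = a"
proof -
  assume x: "x \<in> gpoints G" and xa: "(x0, a) \<in> anch G x"
  show ?thesis
  proof (cases x)
    case (GV v)
    then show ?thesis using xa by (intro exI[of _ "[]"]) auto
  next
    case (GE e t)
    then have et: "e \<in> medges G" "0 < t" "t < elen G e" using x unfolding gpoints_def by auto
    then have g: "gpos G e t = GE e t" using gpos_int by simp
    have "(x0 = esrc G e \<and> a = t) \<or> (x0 = etgt G e \<and> a = elen G e - t)" using xa GE by auto
    then show ?thesis
    proof
      assume "x0 = esrc G e \<and> a = t"
      then show ?thesis using et g GE by (intro exI[of _ "[(e, t, 0)]"]) auto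
    next
      assume "x0 = etgt G e \<and> a = elen G e - t"
      then show ?thesis using et g GE gpos_tgt[OF et(1)] by (intro exI[of _ "[(e, t, elen G e)]"]) auto
    qed
  qed
qed

lemma anch_path2: "y \<in> gpoints G \<Longrightarrow> (y0, b) \<in> anch G y \<Longrightarrow> \<exists>P. spath G (GV y0) P y \<and> cost P = b"
proof -
  assume y: "y \<in> gpoints G" and yb: "(y0, b) \<in> anch G y"
  show ?thesis
  proof (cases y)
    case (GV v)
    then show ?thesis using yb by (intro exI[of _ "[]"]) auto
  next
    case (GE e t)
    then have et: "e \<in> medges G" "0 < t" "t < elen G e" using y unfolding gpoints_def by auto
    then have g: "gpos G e t = GE e t" using gpos_int by simp
    have "(y0 = esrc G e \<and> b = t) \<or> (y0 = etgt G e \<and> b = elen G e - t)" using yb GE by auto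
    then show ?thesis
    proof
      assume "y0 = esrc G e \<and> b = t"
      then show ?thesis using et g GE by (intro exI[of _ "[(e, 0, t)]"]) auto
    next
      assume "y0 = etgt G e \<and> b = elen G e - t"
      then show ?thesis using et g GE gpos_tgt[OF et(1)] by (intro exI[of _ "[(e, elen G e, t)]"]) auto
    qed
  qed
qed

lemma lemmaII:
  assumes x: "x \<in> gpoints G" and y: "y \<in> gpoints G"
  shows "\<exists>P. spath G x P y \<and> cost P = gdist G x y"
proof (cases rule: gdist_cases[of x y])
  case (1 x0 a y0 b)
  obtain P1 where P1: "spath G x P1 (GV x0)" "cost P1 = a" using anch_path1[OF x 1(1)] by blast
  obtain P3 where P3: "spath G (GV y0) P3 y" "cost P3 = b" using anch_path2[OF y 1(2)] by blast
  have V: "x0 \<in> mverts G" "y0 \<in> mverts G" using anch_V[OF x 1(1)] anch_V[OF y 1(2)] by auto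
  obtain P2 where P2: "spath G (GV x0) P2 (GV y0)" "cost P2 = vdist G x0 y0"
    using walk_path[OF vdist_walk[OF V]] by blast
  show ?thesis using spath_app[OF P1(1) spath_app[OF P2(1) P3(1)]] P1(2) P2(2) P3(2) 1(3)
    by (intro exI[of _ "P1 @ P2 @ P3"]) (simp add: cost_app)
next
  case (2 e s t)
  then show ?thesis by (intro exI[of _ "[(e, s, t)]"]) (auto simp: abs_minus_commute)
qed

end

context mg begin
lemma no_backtrack:
  assumes P: "spath G x P y" and y: "y \<in> gpoints G" and min: "cost P = gdist G x y"
    and nzP: "list_all nz P" and j: "Suc j < length P"
    and Pj: "P ! j = (e, a, b)" and PSj: "P ! Suc j = (e, a', b')"
  shows "sgn (b - a) = sgn (b' - a')"
proof (rule ccontr)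
  assume ne: "sgn (b - a) \<noteq> sgn (b' - a')"
  define R where "R = drop (Suc (Suc j)) P"
  have decomp: "P = take j P @ [(e, a, b), (e, a', b')] @ R"
  proof -
    have "P = take j P @ P ! j # drop (Suc j) P" using j by (simp add: id_take_nth_drop)
    also have "drop (Suc j) P = P ! Suc j # R" unfolding R_def using j by (simp add: Cons_nth_drop_Suc)
    finally show ?thesis using Pj PSj by simp
  qed
  obtain w1 w2 where w: "spath G x (take j P) w1" "spath G w1 [(e, a, b), (e, a', b')] w2" "spath G w2 R y"
  proof -
    have "spath G x (take j P @ ([(e, a, b), (e, a', b')] @ R)) y" using P decomp by simp
    then obtain w1 where "spath G x (take j P) w1" "spath G w1 ([(e, a, b), (e, a', b')] @ R) y"
      unfolding spath_app_iff by blast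
    moreover then obtain w2 where "spath G w1 [(e, a, b), (e, a', b')] w2" "spath G w2 R y"
      unfolding spath_app_iff by blast
    ultimately show ?thesis using that by blast
  qed
  have e: "e \<in> medges G" and ab: "a \<in> {0..elen G e}" "b' \<in> {0..elen G e}" "w1 = gpos G e a"
    and bb: "gpos G e b = gpos G e a'" and w2: "w2 = gpos G e b'" using w(2) by auto
  have "b = a'" using gpos_inj[OF e bb] .
  have "spath G w1 [(e, a, b')] w2" using e ab w2 by simp
  then have P': "spath G x (take j P @ [(e, a, b')] @ R) y" using spath_app[OF w(1) spath_app[OF _ w(3)]] by blast
  have nzs: "a \<noteq> b" "a' \<noteq> b'"
  proof -
    have "nz (P ! j)" "nz (P ! Suc j)" using nzP j unfolding list_all_length by auto
    then show "a \<noteq> b" "a' \<noteq> b'" using Pj PSj unfolding nz_def by auto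
  qed
  have lt: "\<bar>b' - a\<bar> < \<bar>b - a\<bar> + \<bar>b' - a'\<bar>"
  proof -
    have "(a < b \<and> b' < a') \<or> (b < a \<and> a' < b')"
      using ne nzs by (auto simp: sgn_if split: if_splits)
    then show ?thesis using \<open>b = a'\<close> by auto
  qed
  have "gdist G x y \<le> cost (take j P @ [(e, a, b')] @ R)" using lemmaI[OF P' y] .
  also have "\<dots> < cost (take j P @ [(e, a, b), (e, a', b')] @ R)" using lt by (simp add: cost_app)
  also have "\<dots> = cost P" using decomp by simp
  finally show False using min by simp
qed

end

lemma deriv_right_quot:
  fixes F :: "real \<Rightarrow> real"
  assumes l: "l > 0" and d: "(F has_real_derivative D) (at 0 within {0..l})"
  shows "((\<lambda>h. (F h - F 0) / h) \<longlongrightarrow> D) (at_right 0)"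
proof -
  have "((\<lambda>y. (F y - F 0) / (y - 0)) \<longlongrightarrow> D) (at 0 within {0..l})"
    using d unfolding has_field_derivative_iff .
  then show ?thesis using at_within_Icc_at_right[OF l] by simp
qed

lemma deriv_left_quot:
  fixes F :: "real \<Rightarrow> real"
  assumes l: "l > 0" and d: "(F has_real_derivative D) (at l within {0..l})"
  shows "((\<lambda>h. (F (l - h) - F l) / h) \<longlongrightarrow> - D) (at_right 0)"
proof -
  have "((\<lambda>y. (F y - F l) / (y - l)) \<longlongrightarrow> D) (at l within {0..l})"
    using d unfolding has_field_derivative_iff .
  then have 1: "((\<lambda>y. (F y - F l) / (y - l)) \<longlongrightarrow> D) (at_left l)"
    using at_within_Icc_at_left[OF l] by simp
  have "at_left l = filtermap (\<lambda>h. l - h) (at_right 0)"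
    unfolding at_left_minus[of l] at_right_to_0[of "- l"] filtermap_filtermap by (simp add: algebra_simps)
  then have "((\<lambda>h. (F (l - h) - F l) / ((l - h) - l)) \<longlongrightarrow> D) (at_right 0)"
    using 1 unfolding filterlim_def[symmetric] by (simp add: filterlim_filtermap)
  then have "((\<lambda>h. - ((F (l - h) - F l) / ((l - h) - l))) \<longlongrightarrow> - D) (at_right 0)"
    by (rule tendsto_minus)
  then show ?thesis by simp
qed

lemma second_deriv_nonneg:
  fixes \<phi> \<phi>' :: "real \<Rightarrow> real"
  assumes \<delta>: "\<delta> > 0"
    and d1: "\<And>x. \<bar>x - t\<bar> < \<delta> \<Longrightarrow> (\<phi> has_real_derivative \<phi>' x) (at x)"
    and d2: "(\<phi>' has_real_derivative c) (at t)"
    and h0: "h0 > 0" and mid: "\<And>h. 0 < h \<Longrightarrow> h < h0 \<Longrightarrow> 2 * \<phi> t \<le> \<phi> (t + h) + \<phi> (t - h)"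
  shows "c \<ge> 0"
proof (rule ccontr)
  assume "\<not> c \<ge> 0"
  then have c: "c < 0" by simp
  obtain d1' where d1': "d1' > 0" "\<forall>h>0. h < d1' \<longrightarrow> \<phi>' t > \<phi>' (t + h)"
    using DERIV_neg_dec_right[OF d2 c] by blast
  obtain d2' where d2': "d2' > 0" "\<forall>h>0. h < d2' \<longrightarrow> \<phi>' t < \<phi>' (t - h)"
    using DERIV_neg_dec_left[OF d2 c] by blast
  define h where "h = min (min d1' d2') (min \<delta> h0) / 2"
  have h: "0 < h" "h < d1'" "h < d2'" "h < \<delta>" "h < h0" unfolding h_def using d1' d2' \<delta> h0 by auto
  define g where "g k = \<phi> (t + k) + \<phi> (t - k) - 2 * \<phi> t" for k
  have gd: "(g has_real_derivative (\<phi>' (t + k) - \<phi>' (t - k))) (at k)" if "\<bar>k\<bar> < \<delta>" for k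
  proof -
    have a: "(\<phi> has_real_derivative \<phi>' (t + k)) (at (t + k))" using d1 that by simp
    have b: "(\<phi> has_real_derivative \<phi>' (t - k)) (at (t - k))" using d1 that by simp
    have "((\<lambda>k. \<phi> (t + k)) has_real_derivative \<phi>' (t + k) * 1) (at k)"
      by (rule DERIV_chain2[where f=\<phi> and g="\<lambda>k. t + k"]) (use a in \<open>auto intro!: derivative_eq_intros\<close>)
    moreover have "((\<lambda>k. \<phi> (t - k)) has_real_derivative \<phi>' (t - k) * (- 1)) (at k)"
      by (rule DERIV_chain2[where f=\<phi> and g="\<lambda>k. t - k"]) (use b in \<open>auto intro!: derivative_eq_intros\<close>)
    ultimately show ?thesis unfolding g_def by (auto intro!: derivative_eq_intros)
  qed
  have "g 0 > g h"
  proof (rule DERIV_neg_imp_decreasing_open[OF h(1)])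
    fix k assume k: "0 < k" "k < h"
    have "\<phi>' (t + k) < \<phi>' t" "\<phi>' t < \<phi>' (t - k)" using d1' d2' k h by auto
    then show "\<exists>y. (g has_real_derivative y) (at k) \<and> y < 0" using gd[of k] k h by (intro exI) auto
  next
    have "\<forall>k\<in>{0..h}. isCont g k"
    proof
      fix k assume "k \<in> {0..h}"
      then have "\<bar>k\<bar> < \<delta>" using h by auto
      then show "isCont g k" using DERIV_isCont[OF gd] by blast
    qed
    then show "continuous_on {0..h} g" by (rule continuous_at_imp_continuous_on)
  qed
  moreover have "g 0 = 0" unfolding g_def by simp
  moreover have "g h \<ge> 0" using mid[OF h(1) h(5)] unfolding g_def by simp
  ultimately show False by simp
qed

lemma conv_usc:
  fixes f :: "real \<Rightarrow> real"
  assumes l: "l > 0"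
    and conv: "\<And>a r b. 0 \<le> a \<Longrightarrow> a < r \<Longrightarrow> r < b \<Longrightarrow> b \<le> l \<Longrightarrow> f r \<le> ((b - r) * f a + (r - a) * f b) / (b - a)"
    and s: "s \<in> {0..l}" and e: "\<epsilon> > 0"
  shows "\<exists>\<delta>>0. \<forall>t\<in>{0..l}. \<bar>t - s\<bar> < \<delta> \<longrightarrow> f t < f s + \<epsilon>"
proof -
  define dR where "dR = (if s < l then \<epsilon> * (l - s) / (\<bar>f l - f s\<bar> + 1) else 1)"
  define dL where "dL = (if 0 < s then \<epsilon> * s / (\<bar>f 0 - f s\<bar> + 1) else 1)"
  have dR: "dR > 0" unfolding dR_def using e by (auto intro!: divide_pos_pos mult_pos_pos)
  have dL: "dL > 0" unfolding dL_def using e s by (auto intro!: divide_pos_pos mult_pos_pos)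
  have right: "f t < f s + \<epsilon>" if t: "s < t" "t \<le> l" "t - s < dR" for t
  proof -
    have sl: "s < l" using t by simp
    have A: "\<bar>f l - f s\<bar> + 1 > 0" by simp
    have tR: "(t - s) * (\<bar>f l - f s\<bar> + 1) < \<epsilon> * (l - s)"
      using t(3) sl A unfolding dR_def by (simp add: field_simps)
    show ?thesis
    proof (cases "t = l")
      case True
      then have "(l - s) * (\<bar>f l - f s\<bar> + 1) < (l - s) * \<epsilon>" using tR by (simp add: mult.commute)
      then have "\<bar>f l - f s\<bar> + 1 < \<epsilon>" using sl by simp
      then have "f l < f s + \<epsilon>" using abs_ge_self[of "f l - f s"] by linarith
      then show ?thesis using True by simp
    next
      case False
      then have "f t \<le> ((l - t) * f s + (t - s) * f l) / (l - s)" using conv[of s t l] t s by auto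
      also have "\<dots> = f s + (t - s) * (f l - f s) / (l - s)" using sl by (simp add: field_simps)
      also have "\<dots> \<le> f s + (t - s) * \<bar>f l - f s\<bar> / (l - s)"
        using t sl by (intro add_left_mono divide_right_mono mult_left_mono) auto
      also have "\<dots> < f s + \<epsilon>"
      proof -
        have "(t - s) * (\<bar>f l - f s\<bar> + 1) = (t - s) * \<bar>f l - f s\<bar> + (t - s)" by (simp add: algebra_simps)
        then have "(t - s) * \<bar>f l - f s\<bar> < \<epsilon> * (l - s)" using tR t by linarith
        then have "(t - s) * \<bar>f l - f s\<bar> / (l - s) < \<epsilon>" using sl by (simp add: field_simps)
        then show ?thesis by simp
      qed
      finally show ?thesis .
    qed
  qed
  have left: "f t < f s + \<epsilon>" if t: "t < s" "0 \<le> t" "s - t < dL" for t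
  proof -
    have s0: "0 < s" using t by simp
    have A: "\<bar>f 0 - f s\<bar> + 1 > 0" by simp
    have tL: "(s - t) * (\<bar>f 0 - f s\<bar> + 1) < \<epsilon> * s"
      using t(3) s0 A unfolding dL_def by (simp add: field_simps)
    show ?thesis
    proof (cases "t = 0")
      case True
      then have "s * (\<bar>f 0 - f s\<bar> + 1) < s * \<epsilon>" using tL by (simp add: mult.commute)
      then have "\<bar>f 0 - f s\<bar> + 1 < \<epsilon>" using s0 by simp
      then have "f 0 < f s + \<epsilon>" using abs_ge_self[of "f 0 - f s"] by linarith
      then show ?thesis using True by simp
    next
      case False
      then have "f t \<le> ((s - t) * f 0 + (t - 0) * f s) / (s - 0)" using conv[of 0 t s] t s by auto
      also have "\<dots> = f s + (s - t) * (f 0 - f s) / s" using s0 by (simp add: field_simps)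
      also have "\<dots> \<le> f s + (s - t) * \<bar>f 0 - f s\<bar> / s"
        using t s0 by (intro add_left_mono divide_right_mono mult_left_mono) auto
      also have "\<dots> < f s + \<epsilon>"
      proof -
        have "(s - t) * (\<bar>f 0 - f s\<bar> + 1) = (s - t) * \<bar>f 0 - f s\<bar> + (s - t)" by (simp add: algebra_simps)
        then have "(s - t) * \<bar>f 0 - f s\<bar> < \<epsilon> * s" using tL t by linarith
        then have "(s - t) * \<bar>f 0 - f s\<bar> / s < \<epsilon>" using s0 by (simp add: field_simps)
        then show ?thesis by simp
      qed
      finally show ?thesis .
    qed
  qed
  show ?thesis
  proof (intro exI[of _ "min dR dL"] conjI ballI impI)
    fix t assume t: "t \<in> {0..l}" "\<bar>t - s\<bar> < min dR dL"
    consider "t = s" | "s < t" | "t < s" by linarith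
    then show "f t < f s + \<epsilon>"
    proof cases
      case 1 then show ?thesis using e by simp
    next
      case 2 then show ?thesis using right t by auto
    next
      case 3 then show ?thesis using left t by auto
    qed
  qed (use dR dL in auto)
qed

lemma finite_delta:
  fixes Q :: "'a \<Rightarrow> real \<Rightarrow> bool"
  assumes "finite A" "\<forall>x\<in>A. \<exists>d>0. Q x d" "\<And>x d d'. Q x d \<Longrightarrow> 0 < d' \<Longrightarrow> d' \<le> d \<Longrightarrow> Q x d'"
  shows "\<exists>d>0. \<forall>x\<in>A. Q x d"
  using assms(1,2)
proof (induction A rule: finite_induct)
  case empty
  then show ?case by (intro exI[of _ 1]) auto
next
  case (insert a A)
  then obtain d1 where d1: "d1 > 0" "\<forall>x\<in>A. Q x d1" by auto
  obtain d2 where d2: "d2 > 0" "Q a d2" using insert by auto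
  show ?case using d1 d2 assms(3)
    by (intro exI[of _ "min d1 d2"]) (auto simp: min_le_iff_disj)
qed

context mg begin

lemma edge_conv:
  assumes cu: "mg_convex G u" and e: "e \<in> medges G"
    and abr: "0 \<le> a" "a < r" "r < b" "b \<le> elen G e"
  shows "u (gpos G e r) \<le> ((b - r) * u (gpos G e a) + (r - a) * u (gpos G e b)) / (b - a)"
proof -
  have in1: "a \<in> {0..elen G e}" "b \<in> {0..elen G e}" "r \<in> {0..elen G e}" using abr by auto
  let ?x = "gpos G e a" and ?y = "gpos G e b" and ?z = "gpos G e r"
  have g: "?x \<in> gpoints G" "?y \<in> gpoints G" "?z \<in> gpoints G" using gpos_in[OF e] in1 by auto
  have ne: "?x \<noteq> ?y" using gpos_inj[OF e, of a b] abr by auto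
  have d: "gdist G ?x ?y = b - a" "gdist G ?x ?z = r - a" "gdist G ?z ?y = b - r" "gdist G ?y ?z = b - r"
    using eaxiom[OF e] in1 abr by auto
  have "on_min_path G ?x ?y ?z" unfolding on_min_path_def using d by simp
  then have "u ?z \<le> gdist G ?y ?z / gdist G ?x ?y * u ?x + gdist G ?x ?z / gdist G ?x ?y * u ?y"
    using cu g ne unfolding mg_convex_def by blast
  also have "\<dots> = ((b - r) * u ?x + (r - a) * u ?y) / (b - a)" unfolding d
    by (simp add: add_divide_distrib)
  finally show ?thesis .
qed

lemma near:
  assumes p: "p \<in> gpoints G"
  shows "\<exists>r>0. \<forall>q\<in>gpoints G. gdist G p q < r \<longrightarrow>
     (\<exists>e s t. e \<in> medges G \<and> s \<in> {0..elen G e} \<and> t \<in> {0..elen G e} \<and> p = gpos G e s \<and> q = gpos G e t)"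
proof (cases p)
  case (GV v)
  then have vV: "v \<in> mverts G" using p unfolding gpoints_def by auto
  show ?thesis
  proof (intro exI[of _ ml] conjI ballI impI)
    show "ml > 0" by (rule ml_pos)
    fix q assume q: "q \<in> gpoints G" and dq: "gdist G p q < ml"
    show "\<exists>e s t. e \<in> medges G \<and> s \<in> {0..elen G e} \<and> t \<in> {0..elen G e} \<and> p = gpos G e s \<and> q = gpos G e t"
    proof (cases rule: gdist_cases[of p q])
      case (1 x a y b)
      have xa: "x = v" "a = 0" using 1(1) GV by auto
      have yV: "y \<in> mverts G" "b \<ge> 0" using anch_V[OF q 1(2)] by auto
      have "y = v"
      proof (rule ccontr)
        assume "y \<noteq> v"
        then have "vdist G v y \<ge> ml" using vdist_ml[OF vV yV(1)] by simp
        then show False using dq 1(3) xa yV by simp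
      qed
      show ?thesis
      proof (cases q)
        case (GV w)
        then have "w = v" using 1(2) \<open>y = v\<close> by simp
        obtain e where e: "e \<in> medges G" "esrc G e = v \<or> etgt G e = v"
          using deg[OF vV] unfolding inc_edges_def by blast
        then show ?thesis using GV \<open>p = GV v\<close> \<open>w = v\<close> cv_gpos[OF e(1), of v] cv_range[OF e(1), of v]
          by metis
      next
        case (GE e t)
        then have et: "e \<in> medges G" "0 < t" "t < elen G e" using q unfolding gpoints_def by auto
        have "v = esrc G e \<or> v = etgt G e" using 1(2) GE \<open>y = v\<close> by auto
        then show ?thesis using GE \<open>p = GV v\<close> cv_gpos[OF et(1), of v] cv_range[OF et(1), of v] et gpos_int[of t e]
          by (metis atLeastAtMost_iff less_imp_le)
      qed
    next
      case (2 e s t)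
      then show ?thesis by blast
    qed
  qed
next
  case (GE e t)
  then have et: "e \<in> medges G" "0 < t" "t < elen G e" using p unfolding gpoints_def by auto
  show ?thesis
  proof (intro exI[of _ "min t (elen G e - t)"] conjI ballI impI)
    show "min t (elen G e - t) > 0" using et by simp
    fix q assume q: "q \<in> gpoints G" and dq: "gdist G p q < min t (elen G e - t)"
    show "\<exists>e s t. e \<in> medges G \<and> s \<in> {0..elen G e} \<and> t \<in> {0..elen G e} \<and> p = gpos G e s \<and> q = gpos G e t"
    proof (cases rule: gdist_cases[of p q])
      case (1 x a y b)
      have "a \<ge> min t (elen G e - t)" using 1(1) GE by auto
      moreover have "x \<in> mverts G" using anch_V[OF p 1(1)] by simp
      moreover have "y \<in> mverts G" "b \<ge> 0" using anch_V[OF q 1(2)] by auto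
      ultimately have "gdist G p q \<ge> min t (elen G e - t)" using 1(3) vdist_nonneg[of x y] by linarith
      then show ?thesis using dq by simp
    next
      case (2 e s t)
      then show ?thesis by blast
    qed
  qed
qed

lemma conv_usc_graph:
  assumes cu: "mg_convex G u"
  shows "mg_usc G u"
  unfolding mg_usc_def
proof (intro ballI allI impI)
  fix x and \<epsilon> :: real assume x: "x \<in> gpoints G" and \<epsilon>: "\<epsilon> > 0"
  obtain r where r: "r > 0" "\<forall>q\<in>gpoints G. gdist G x q < r \<longrightarrow>
     (\<exists>e s t. e \<in> medges G \<and> s \<in> {0..elen G e} \<and> t \<in> {0..elen G e} \<and> x = gpos G e s \<and> q = gpos G e t)"
    using near[OF x] by blast
  define Q where "Q e d = (\<forall>s t. s \<in> {0..elen G e} \<longrightarrow> t \<in> {0..elen G e} \<longrightarrow> x = gpos G e s \<longrightarrow>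
      \<bar>t - s\<bar> < d \<longrightarrow> u (gpos G e t) < u x + \<epsilon>)" for e d
  have "\<exists>d>0. Q e d" if e: "e \<in> medges G" for e
  proof (cases "\<exists>s\<in>{0..elen G e}. x = gpos G e s")
    case True
    then obtain s where s: "s \<in> {0..elen G e}" "x = gpos G e s" by blast
    have "\<exists>\<delta>>0. \<forall>t\<in>{0..elen G e}. \<bar>t - s\<bar> < \<delta> \<longrightarrow> u (gpos G e t) < u (gpos G e s) + \<epsilon>"
      by (rule conv_usc[OF e_pos[OF e] _ s(1) \<epsilon>]) (use edge_conv[OF cu e] in auto)
    then obtain \<delta> where "\<delta> > 0" "\<forall>t\<in>{0..elen G e}. \<bar>t - s\<bar> < \<delta> \<longrightarrow> u (gpos G e t) < u (gpos G e s) + \<epsilon>"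
      by blast
    then show ?thesis unfolding Q_def using s gpos_inj[OF e] by (intro exI[of _ \<delta>]) metis
  next
    case False
    then show ?thesis unfolding Q_def by (intro exI[of _ 1]) auto
  qed
  then obtain d where d: "d > 0" "\<forall>e\<in>medges G. Q e d"
    using finite_delta[OF finE, of Q] unfolding Q_def by (smt (verit))
  show "\<exists>\<delta>>0. \<forall>y\<in>gpoints G. gdist G x y < \<delta> \<longrightarrow> u y < u x + \<epsilon>"
  proof (intro exI[of _ "min r d"] conjI ballI impI)
    fix y assume y: "y \<in> gpoints G" "gdist G x y < min r d"
    then obtain e s t where est: "e \<in> medges G" "s \<in> {0..elen G e}" "t \<in> {0..elen G e}" "x = gpos G e s" "y = gpos G e t"
      using r by auto
    then have "gdist G x y = \<bar>s - t\<bar>" using eaxiom by simp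
    then have "\<bar>t - s\<bar> < d" using y by (simp add: abs_minus_commute)
    then show "u y < u x + \<epsilon>" using d est unfolding Q_def by blast
  qed (use r d in auto)
qed

end

context mg begin

lemma conv_edge_cond:
  assumes cu: "mg_convex G u" and e: "e \<in> medges G" and t: "0 < t" "t < elen G e"
    and \<delta>: "\<delta> > 0" and C2: "C2_on {t - \<delta> <..< t + \<delta>} \<phi> \<phi>' \<phi>''" and eq: "\<phi> t = u (GE e t)"
    and le: "\<forall>s. \<bar>s - t\<bar> < \<delta> \<and> 0 < s \<and> s < elen G e \<longrightarrow> u (GE e s) \<le> \<phi> s"
  shows "\<phi>'' t \<ge> 0"
proof (rule second_deriv_nonneg[OF \<delta>])
  show "\<And>x. \<bar>x - t\<bar> < \<delta> \<Longrightarrow> (\<phi> has_real_derivative \<phi>' x) (at x)"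
    using C2 unfolding C2_on_def by (auto simp: abs_less_iff)
  show "(\<phi>' has_real_derivative \<phi>'' t) (at t)" using C2 \<delta> unfolding C2_on_def by auto
  show "min \<delta> (min t (elen G e - t)) > 0" using \<delta> t by simp
  fix h assume h: "0 < h" "h < min \<delta> (min t (elen G e - t))"
  have "u (gpos G e t) \<le> (((t + h) - t) * u (gpos G e (t - h)) + (t - (t - h)) * u (gpos G e (t + h))) / ((t + h) - (t - h))"
    using h by (intro edge_conv[OF cu e]) auto
  moreover have "gpos G e t = GE e t" "gpos G e (t - h) = GE e (t - h)" "gpos G e (t + h) = GE e (t + h)"
    using h t by (auto intro!: gpos_int)
  ultimately have "u (GE e t) \<le> (h * u (GE e (t - h)) + h * u (GE e (t + h))) / (2 * h)" by simp
  also have "\<dots> = (u (GE e (t - h)) + u (GE e (t + h))) / 2" using h by (simp add: field_simps)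
  finally have "2 * u (GE e t) \<le> u (GE e (t - h)) + u (GE e (t + h))" by simp
  moreover have "u (GE e (t - h)) \<le> \<phi> (t - h)" "u (GE e (t + h)) \<le> \<phi> (t + h)" using le h by auto
  ultimately show "2 * \<phi> t \<le> \<phi> (t + h) + \<phi> (t - h)" using eq by simp
qed

definition cpt :: "'e \<Rightarrow> 'v \<Rightarrow> real \<Rightarrow> real" where
  "cpt e v d = (if v = esrc G e then d else elen G e - d)"

lemma cpt_facts:
  assumes e: "e \<in> medges G" and v: "v = esrc G e \<or> v = etgt G e" and d: "0 < d" "d < elen G e"
  shows "cpt e v d \<in> {0<..<elen G e}" "\<bar>cpt e v d - cv G e v\<bar> = d"
    "min (cpt e v d) (elen G e - cpt e v d) \<le> d"
  using e_ne[OF e] v d unfolding cpt_def cv_def by auto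

lemma anch_cpt:
  assumes e: "e \<in> medges G" and v: "v = esrc G e \<or> v = etgt G e" and d: "0 < d" "2 * d \<le> elen G e"
    and xa: "(x0, a) \<in> anch G (gpos G e (cpt e v d))"
  shows "a \<ge> d"
proof -
  have c: "cpt e v d \<in> {0<..<elen G e}" using cpt_facts[OF e v] d by auto
  then have "gpos G e (cpt e v d) = GE e (cpt e v d)" using gpos_int by auto
  then have "a = cpt e v d \<or> a = elen G e - cpt e v d" using xa by auto
  then show ?thesis using v d e_ne[OF e] unfolding cpt_def by auto
qed

lemma conv_vertex_cond:
  assumes cu: "mg_convex G u" and vV: "v \<in> mverts G"
    and e: "e \<in> inc_edges G v" and e': "e' \<in> inc_edges G v" and ee': "e \<noteq> e'"
    and C1: "C1_closed (elen G e) (\<lambda>s. \<phi> (gpos G e s)) \<phi>1"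
    and C1': "C1_closed (elen G e') (\<lambda>s. \<phi> (gpos G e' s)) \<phi>2"
    and eqv: "\<phi> (GV v) = u (GV v)"
    and le1: "\<forall>s\<in>{0..elen G e}. u (gpos G e s) \<le> \<phi> (gpos G e s)"
    and le2: "\<forall>s\<in>{0..elen G e'}. u (gpos G e' s) \<le> \<phi> (gpos G e' s)"
  shows "ingoing G e v \<phi>1 + ingoing G e' v \<phi>2 \<ge> 0"
proof -
  have eE: "e \<in> medges G" and ve: "v = esrc G e \<or> v = etgt G e"
    and eE': "e' \<in> medges G" and ve': "v = esrc G e' \<or> v = etgt G e'"
    using e e' unfolding inc_edges_def by auto
  have lim: "((\<lambda>d. (\<phi> (gpos G f (cpt f v d)) - \<phi> (GV v)) / d) \<longlongrightarrow> ingoing G f v \<psi>) (at_right 0)"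
    if f: "f \<in> medges G" "v = esrc G f \<or> v = etgt G f" and C: "C1_closed (elen G f) (\<lambda>s. \<phi> (gpos G f s)) \<psi>"
    for f \<psi>
  proof (cases "v = esrc G f")
    case True
    have "((\<lambda>s. \<phi> (gpos G f s)) has_real_derivative \<psi> 0) (at 0 within {0..elen G f})"
      using C e_pos[OF f(1)] unfolding C1_closed_def by auto
    from deriv_right_quot[OF e_pos[OF f(1)] this] show ?thesis
      using True unfolding cpt_def ingoing_def by simp
  next
    case False
    then have vt: "v = etgt G f" using f by auto
    have "((\<lambda>s. \<phi> (gpos G f s)) has_real_derivative \<psi> (elen G f)) (at (elen G f) within {0..elen G f})"
      using C e_pos[OF f(1)] unfolding C1_closed_def by auto
    from deriv_left_quot[OF e_pos[OF f(1)] this] show ?thesis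
      using False vt gpos_tgt[OF f(1)] unfolding cpt_def ingoing_def by simp
  qed
  have L: "((\<lambda>d. (\<phi> (gpos G e (cpt e v d)) - \<phi> (GV v)) / d + (\<phi> (gpos G e' (cpt e' v d)) - \<phi> (GV v)) / d)
      \<longlongrightarrow> ingoing G e v \<phi>1 + ingoing G e' v \<phi>2) (at_right 0)"
    by (intro tendsto_add lim eE ve eE' ve' C1 C1')
  show ?thesis
  proof (rule tendsto_lowerbound[OF L])
    show "\<forall>\<^sub>F d in at_right 0. 0 \<le> (\<phi> (gpos G e (cpt e v d)) - \<phi> (GV v)) / d + (\<phi> (gpos G e' (cpt e' v d)) - \<phi> (GV v)) / d"
      unfolding eventually_at_right_field
    proof (intro exI[of _ "min (elen G e) (elen G e') / 2"] conjI allI impI)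
      show "(0::real) < min (elen G e) (elen G e') / 2" using e_pos[OF eE] e_pos[OF eE'] by simp
      fix d :: real assume "0 < d" "d < min (elen G e) (elen G e') / 2"
      then have d: "0 < d" "2 * d < elen G e" "2 * d < elen G e'" by auto
      define x where "x = gpos G e (cpt e v d)"
      define y where "y = gpos G e' (cpt e' v d)"
      have c1: "cpt e v d \<in> {0<..<elen G e}" "\<bar>cpt e v d - cv G e v\<bar> = d" using cpt_facts[OF eE ve] d by auto
      have c2: "cpt e' v d \<in> {0<..<elen G e'}" "\<bar>cpt e' v d - cv G e' v\<bar> = d" using cpt_facts[OF eE' ve'] d by auto
      have xGE: "x = GE e (cpt e v d)" unfolding x_def using c1 gpos_int by auto
      have yGE: "y = GE e' (cpt e' v d)" unfolding y_def using c2 gpos_int by auto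
      have vg: "GV v = gpos G e (cv G e v)" "GV v = gpos G e' (cv G e' v)"
        using cv_gpos[OF eE ve] cv_gpos[OF eE' ve'] by auto
      have gx: "x \<in> gpoints G" unfolding x_def using c1 by (intro gpos_in[OF eE]) auto
      have gy: "y \<in> gpoints G" unfolding y_def using c2 by (intro gpos_in[OF eE']) auto
      have gv: "GV v \<in> gpoints G" using vV unfolding gpoints_def by auto
      have dxv: "gdist G x (GV v) = d" unfolding x_def vg(1) using c1 cv_range[OF eE]
        by (subst eaxiom[OF eE]) auto
      have dvy: "gdist G (GV v) y = d" unfolding y_def vg(2) using c2 cv_range[OF eE']
        by (subst eaxiom[OF eE']) (auto simp: abs_minus_commute)
      have dxy: "gdist G x y = 2 * d"
      proof (rule antisym)
        have "(v, d) \<in> anch G x" using xGE ve c1 unfolding cv_def by (auto split: if_splits)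
        moreover have "(v, d) \<in> anch G y" using yGE ve' c2 unfolding cv_def by (auto split: if_splits)
        ultimately have "gdist G x y \<le> d + vdist G v v + d" by (rule gdist_le_anch)
        then show "gdist G x y \<le> 2 * d" using vdist_refl[OF vV] by simp
      next
        show "2 * d \<le> gdist G x y"
        proof (cases rule: gdist_cases[of x y])
          case (1 x0 a y0 b)
          have "a \<ge> d" using anch_cpt[OF eE ve] d 1(1) unfolding x_def by simp
          moreover have "b \<ge> d" using anch_cpt[OF eE' ve'] d 1(2) unfolding y_def by simp
          moreover have "vdist G x0 y0 \<ge> 0" using anch_V[OF gx 1(1)] anch_V[OF gy 1(2)] vdist_nonneg by blast
          ultimately show ?thesis using 1(3) by simp
        next
          case (2 f s t)
          then have "f = e" using xGE gpos_eq_GE by metis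
          moreover have "f = e'" using 2 yGE gpos_eq_GE by metis
          ultimately show ?thesis using ee' by simp
        qed
      qed
      have xy: "x \<noteq> y" using xGE yGE ee' by simp
      have "on_min_path G x y (GV v)" unfolding on_min_path_def using dxv dvy dxy by simp
      then have "u (GV v) \<le> gdist G y (GV v) / gdist G x y * u x + gdist G x (GV v) / gdist G x y * u y"
        using cu gx gy gv xy unfolding mg_convex_def by blast
      also have "\<dots> = (u x + u y) / 2" using dxv dvy dxy d gdist_sym[of y "GV v"] by (simp add: field_simps)
      finally have "2 * u (GV v) \<le> u x + u y" by simp
      moreover have "u x \<le> \<phi> x" unfolding x_def using le1 c1 by auto
      moreover have "u y \<le> \<phi> y" unfolding y_def using le2 c2 by auto
      ultimately have "0 \<le> (\<phi> x - \<phi> (GV v)) + (\<phi> y - \<phi> (GV v))" using eqv by simp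
      then have f1: "0 \<le> ((\<phi> x - \<phi> (GV v)) + (\<phi> y - \<phi> (GV v))) / d" using d by simp
      have f2: "(\<phi> x - \<phi> (GV v)) / d + (\<phi> y - \<phi> (GV v)) / d = ((\<phi> x - \<phi> (GV v)) + (\<phi> y - \<phi> (GV v))) / d"
        by (rule add_divide_distrib[symmetric])
      have "0 \<le> (\<phi> x - \<phi> (GV v)) / d + (\<phi> y - \<phi> (GV v)) / d" using f1 f2 by linarith
      then show "0 \<le> (\<phi> (gpos G e (cpt e v d)) - \<phi> (GV v)) / d + (\<phi> (gpos G e' (cpt e' v d)) - \<phi> (GV v)) / d"
        unfolding x_def y_def .
    qed
  qed simp
qed

lemma dir1:
  assumes cu: "mg_convex G u"
  shows "viscosity_subsolution G u"
  unfolding viscosity_subsolution_def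
proof (intro conjI)
  show "mg_usc G u" using conv_usc_graph[OF cu] .
  show "\<forall>e\<in>medges G. \<forall>t. 0 < t \<and> t < elen G e \<longrightarrow>
        (\<forall>\<delta>>0. \<forall>\<phi> \<phi>' \<phi>''. C2_on {t - \<delta> <..< t + \<delta>} \<phi> \<phi>' \<phi>'' \<and> \<phi> t = u (GE e t) \<and>
           (\<forall>s. \<bar>s - t\<bar> < \<delta> \<and> 0 < s \<and> s < elen G e \<longrightarrow> u (GE e s) \<le> \<phi> s)
           \<longrightarrow> \<phi>'' t \<ge> 0)"
    using conv_edge_cond[OF cu] by blast
  show "\<forall>v\<in>mverts G. card (inc_edges G v) > 1 \<longrightarrow>
        (\<forall>e\<in>inc_edges G v. \<forall>e'\<in>inc_edges G v. e \<noteq> e' \<longrightarrow>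
          (\<forall>\<phi> \<phi>e' \<phi>f'.
             C1_closed (elen G e) (\<lambda>s. \<phi> (gpos G e s)) \<phi>e' \<and>
             C1_closed (elen G e') (\<lambda>s. \<phi> (gpos G e' s)) \<phi>f' \<and>
             \<phi> (GV v) = u (GV v) \<and>
             (\<forall>s\<in>{0..elen G e}. u (gpos G e s) \<le> \<phi> (gpos G e s)) \<and>
             (\<forall>s\<in>{0..elen G e'}. u (gpos G e' s) \<le> \<phi> (gpos G e' s))
             \<longrightarrow> ingoing G e v \<phi>e' + ingoing G e' v \<phi>f' \<ge> 0))"
    using conv_vertex_cond[OF cu] by blast
qed

end

lemma gam_app: "spath G x (P @ Q) y \<Longrightarrow> 0 \<le> s \<Longrightarrow> s \<le> cost P \<Longrightarrow> gam G x (P @ Q) s = gam G x P s"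
proof (induction P arbitrary: x s)
  case Nil
  then show ?case using gam_zero[of G x Q y] by simp
next
  case (Cons sg P)
  obtain e a b where sg: "sg = (e, a, b)" by (cases sg) auto
  show ?case
  proof (cases "s \<le> \<bar>b - a\<bar>")
    case True
    then show ?thesis using sg by simp
  next
    case False
    then have "gam G (gpos G e b) (P @ Q) (s - \<bar>b - a\<bar>) = gam G (gpos G e b) P (s - \<bar>b - a\<bar>)"
      using Cons sg by (intro Cons.IH) auto
    then show ?thesis using sg False by simp
  qed
qed

lemma nz_cost_zero: "list_all nz P \<Longrightarrow> cost P = 0 \<Longrightarrow> P = []"
proof (cases P)
  case (Cons sg P')
  assume a: "list_all nz P" "cost P = 0"
  obtain e a0 b0 where sg: "sg = (e, a0, b0)" by (cases sg) auto
  then have "a0 \<noteq> b0" using a Cons unfolding nz_def by auto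
  then have "cost P > 0" using Cons sg cost_nonneg[of P'] by simp
  then show ?thesis using a by simp
qed simp

lemma spath_nth: "spath G x P y \<Longrightarrow> j < length P \<Longrightarrow> P ! j = (e, a, b) \<Longrightarrow>
    e \<in> medges G \<and> a \<in> {0..elen G e} \<and> b \<in> {0..elen G e}"
proof (induction P arbitrary: x j)
  case Nil
  then show ?case by simp
next
  case (Cons sg P)
  obtain e0 a0 b0 where sg: "sg = (e0, a0, b0)" by (cases sg) auto
  show ?case
  proof (cases j)
    case 0 then show ?thesis using Cons sg by auto
  next
    case (Suc j') then show ?thesis using Cons sg by auto
  qed
qed

lemma spath_junc: "spath G x P y \<Longrightarrow> Suc j < length P \<Longrightarrow> P ! j = (e, a, b) \<Longrightarrow> P ! Suc j = (e', a', b') \<Longrightarrow>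
    gpos G e b = gpos G e' a'"
proof (induction P arbitrary: x j)
  case Nil
  then show ?case by simp
next
  case (Cons sg P)
  obtain e0 a0 b0 where sg: "sg = (e0, a0, b0)" by (cases sg) auto
  show ?case
  proof (cases j)
    case 0
    then obtain P' where P: "P = (e', a', b') # P'" using Cons by (cases P) auto
    then show ?thesis using Cons sg 0 by auto
  next
    case (Suc j') then show ?thesis using Cons sg by auto
  qed
qed

lemma nz_slen_pos: "list_all nz P \<Longrightarrow> j < length P \<Longrightarrow> slen (P ! j) > 0"
  unfolding list_all_length nz_def slen_def by auto

context mg begin

lemma usc_edge_bdd:
  assumes usc: "mg_usc G u" and e: "e \<in> medges G"
  shows "\<exists>B. \<forall>s\<in>{0..elen G e}. u (gpos G e s) \<le> B"
proof (rule usc_bdd_above)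
  show "0 \<le> elen G e" using e_pos[OF e] by simp
  show "uscI {0..elen G e} (\<lambda>s. u (gpos G e s))"
    unfolding uscI_def
  proof (intro ballI allI impI)
    fix s and \<epsilon> :: real assume s: "s \<in> {0..elen G e}" and \<epsilon>: "\<epsilon> > 0"
    obtain \<delta> where \<delta>: "\<delta> > 0" "\<forall>y\<in>gpoints G. gdist G (gpos G e s) y < \<delta> \<longrightarrow> u y < u (gpos G e s) + \<epsilon>"
      using usc gpos_in[OF e s] \<epsilon> unfolding mg_usc_def by blast
    show "\<exists>d>0. \<forall>t\<in>{0..elen G e}. \<bar>t - s\<bar> < d \<longrightarrow> u (gpos G e t) < u (gpos G e s) + \<epsilon>"
    proof (intro exI[of _ \<delta>] conjI ballI impI)
      fix t assume t: "t \<in> {0..elen G e}" "\<bar>t - s\<bar> < \<delta>"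
      then have "gdist G (gpos G e s) (gpos G e t) < \<delta>" using eaxiom[OF e s t(1)] by (simp add: abs_minus_commute)
      then show "u (gpos G e t) < u (gpos G e s) + \<epsilon>" using \<delta> gpos_in[OF e t(1)] by blast
    qed (use \<delta> in auto)
  qed
qed

lemma gam_seg':
  assumes "spath G x P y" "j < length P" "P ! j = (e, a, b)"
    "cost (take j P) \<le> s" "s \<le> cost (take (Suc j) P)"
  shows "gam G x P s = gpos G e (a + sgn (b - a) * (s - cost (take j P)))"
  using gam_seg[OF assms(1-4)] assms cost_take_Suc[OF assms(2)] by (simp add: slen_def)

lemma seg_coord:
  fixes a b d l :: real
  assumes "a \<in> {0..l}" "b \<in> {0..l}" "0 \<le> d" "d \<le> \<bar>b - a\<bar>"
  shows "a + sgn (b - a) * d \<in> {0..l}"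
  using seg_between[OF assms] .

lemma seg_coord_dist:
  fixes a b s t :: real
  shows "\<bar>(a + sgn (b - a) * s) - (a + sgn (b - a) * t)\<bar> = (if a = b then 0 else \<bar>s - t\<bar>)"
  by (cases "a < b"; cases "a = b") (auto simp: sgn_if abs_minus_commute)

lemma loc_dist_same:
  assumes P: "spath G x P y" and j: "j < length P" and Pj: "P ! j = (e, a, b)"
    and m: "cost (take j P) \<le> m" "m \<le> cost (take (Suc j) P)"
    and s: "cost (take j P) \<le> s" "s \<le> cost (take (Suc j) P)"
  shows "gdist G (gam G x P m) (gam G x P s) \<le> \<bar>s - m\<bar>"
proof -
  have eab: "e \<in> medges G" "a \<in> {0..elen G e}" "b \<in> {0..elen G e}" using spath_nth[OF P j Pj] by auto
  have sl: "cost (take (Suc j) P) = cost (take j P) + \<bar>b - a\<bar>" using cost_take_Suc[OF j] Pj by (simp add: slen_def)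
  have c: "a + sgn (b - a) * (m - cost (take j P)) \<in> {0..elen G e}" "a + sgn (b - a) * (s - cost (take j P)) \<in> {0..elen G e}"
    using seg_coord[OF eab(2) eab(3), of "m - cost (take j P)"] seg_coord[OF eab(2) eab(3), of "s - cost (take j P)"]
      m s sl by auto
  have "gdist G (gam G x P m) (gam G x P s) = \<bar>(a + sgn (b - a) * (m - cost (take j P))) - (a + sgn (b - a) * (s - cost (take j P)))\<bar>"
    unfolding gam_seg'[OF P j Pj m] gam_seg'[OF P j Pj s] using eaxiom[OF eab(1) c] .
  also have "\<dots> \<le> \<bar>s - m\<bar>" unfolding seg_coord_dist by (auto simp: abs_minus_commute)
  finally show ?thesis .
qed

lemma loc_dist_next:
  assumes P: "spath G x P y" and y: "y \<in> gpoints G" and j: "Suc j < length P"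
    and m: "cost (take j P) \<le> m" "m \<le> cost (take (Suc j) P)"
    and s: "cost (take (Suc j) P) \<le> s" "s \<le> cost (take (Suc (Suc j)) P)"
  shows "gdist G (gam G x P m) (gam G x P s) \<le> s - m"
proof -
  obtain e a b where Pj: "P ! j = (e, a, b)" by (cases "P ! j") auto
  obtain e' a' b' where PSj: "P ! Suc j = (e', a', b')" by (cases "P ! Suc j") auto
  have j': "j < length P" using j by simp
  have eab: "e \<in> medges G" "a \<in> {0..elen G e}" "b \<in> {0..elen G e}" using spath_nth[OF P j' Pj] by auto
  have eab': "e' \<in> medges G" "a' \<in> {0..elen G e'}" "b' \<in> {0..elen G e'}" using spath_nth[OF P j PSj] by auto
  have sl: "cost (take (Suc j) P) = cost (take j P) + \<bar>b - a\<bar>" using cost_take_Suc[OF j'] Pj by (simp add: slen_def)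
  have sl': "cost (take (Suc (Suc j)) P) = cost (take (Suc j) P) + \<bar>b' - a'\<bar>" using cost_take_Suc[OF j] PSj by (simp add: slen_def)
  define cm where "cm = a + sgn (b - a) * (m - cost (take j P))"
  define cs where "cs = a' + sgn (b' - a') * (s - cost (take (Suc j) P))"
  have cm: "cm \<in> {0..elen G e}" unfolding cm_def
    using seg_coord[OF eab(2) eab(3), of "m - cost (take j P)"] m sl by auto
  have cs: "cs \<in> {0..elen G e'}" unfolding cs_def
    using seg_coord[OF eab'(2) eab'(3), of "s - cost (take (Suc j) P)"] s sl' by auto
  have gm: "gam G x P m = gpos G e cm" unfolding cm_def using gam_seg'[OF P j' Pj m] .
  have gs: "gam G x P s = gpos G e' cs" unfolding cs_def using gam_seg'[OF P j PSj s] .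
  have junc: "gpos G e b = gpos G e' a'" using spath_junc[OF P j Pj PSj] .
  have ys: "gpos G e' cs \<in> gpoints G" using gpos_in[OF eab'(1) cs] .
  have "gdist G (gpos G e cm) (gpos G e' cs) \<le> \<bar>cm - b\<bar> + gdist G (gpos G e b) (gpos G e' cs)"
    using gdist_step[OF eab(1) cm eab(3) ys] .
  also have "gdist G (gpos G e b) (gpos G e' cs) = \<bar>a' - cs\<bar>" unfolding junc using eaxiom[OF eab'(1) eab'(2) cs] .
  also have "\<bar>cm - b\<bar> \<le> cost (take (Suc j) P) - m"
  proof -
    have "b = a + sgn (b - a) * \<bar>b - a\<bar>" using sgn_abs_cancel by simp
    then have "\<bar>cm - b\<bar> = \<bar>(a + sgn (b - a) * (m - cost (take j P))) - (a + sgn (b - a) * \<bar>b - a\<bar>)\<bar>"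
      unfolding cm_def by simp
    also have "\<dots> \<le> \<bar>(m - cost (take j P)) - \<bar>b - a\<bar>\<bar>" unfolding seg_coord_dist by auto
    finally show ?thesis using m sl by simp
  qed
  also have "\<bar>a' - cs\<bar> \<le> s - cost (take (Suc j) P)"
  proof -
    have "\<bar>a' - cs\<bar> = \<bar>(a' + sgn (b' - a') * 0) - (a' + sgn (b' - a') * (s - cost (take (Suc j) P)))\<bar>"
      unfolding cs_def by simp
    also have "\<dots> \<le> \<bar>0 - (s - cost (take (Suc j) P))\<bar>" unfolding seg_coord_dist by auto
    finally show ?thesis using s by simp
  qed
  finally show ?thesis unfolding gm gs by simp
qed

end

definition Tset :: "'e seg list \<Rightarrow> real set" where
  "Tset Q = (\<lambda>j. cost (take j Q)) ` {j. 0 < j \<and> j < length Q}"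

lemma sgn_sq: "a \<noteq> b \<Longrightarrow> sgn (b - a) * sgn (b - a) = (1::real)"
  by (cases "a < b") (auto simp: sgn_if)

lemma strict_between:
  fixes a b d l :: real
  assumes "a \<in> {0..l}" "b \<in> {0..l}" "0 < d" "d < \<bar>b - a\<bar>"
  shows "0 < a + sgn (b - a) * d \<and> a + sgn (b - a) * d < l"
  using assms by (cases "a < b"; cases "a = b") (auto simp: sgn_if)

context mg begin

lemma gam_in:
  assumes Q: "spath G x Q y" and ne: "Q \<noteq> []" and s: "0 \<le> s" "s \<le> cost Q"
  shows "gam G x Q s \<in> gpoints G"
proof -
  obtain j where j: "j < length Q" "cost (take j Q) \<le> s" "s \<le> cost (take (Suc j) Q)"
    using gam_cover[OF ne s] by blast
  obtain e a b where Qj: "Q ! j = (e, a, b)" by (cases "Q ! j") auto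
  have eab: "e \<in> medges G" "a \<in> {0..elen G e}" "b \<in> {0..elen G e}" using spath_nth[OF Q j(1) Qj] by auto
  have sl: "cost (take (Suc j) Q) = cost (take j Q) + \<bar>b - a\<bar>" using cost_take_Suc[OF j(1)] Qj by (simp add: slen_def)
  have "a + sgn (b - a) * (s - cost (take j Q)) \<in> {0..elen G e}"
    using seg_coord[OF eab(2) eab(3), of "s - cost (take j Q)"] j sl by auto
  then show ?thesis unfolding gam_seg'[OF Q j(1) Qj j(2,3)] by (rule gpos_in[OF eab(1)])
qed

definition lmin :: "'e seg list \<Rightarrow> real" where
  "lmin Q = Min ((\<lambda>j. slen (Q ! j)) ` {j. j < length Q})"

lemma lmin_pos: "list_all nz Q \<Longrightarrow> Q \<noteq> [] \<Longrightarrow> lmin Q > 0"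
  unfolding lmin_def using nz_slen_pos by (subst Min_gr_iff) auto

lemma lmin_le: "j < length Q \<Longrightarrow> lmin Q \<le> slen (Q ! j)"
  unfolding lmin_def by (intro Min_le) auto

lemma loc_dist:
  assumes Q: "spath G x Q y" and y: "y \<in> gpoints G" and nzQ: "list_all nz Q" and ne: "Q \<noteq> []"
    and ms: "0 \<le> m" "m \<le> s" "s \<le> cost Q" "s - m < lmin Q"
  shows "gdist G (gam G x Q m) (gam G x Q s) \<le> s - m"
proof -
  obtain j where j: "j < length Q" "cost (take j Q) \<le> m" "m \<le> cost (take (Suc j) Q)"
    using gam_cover[OF ne, of m] ms by auto
  obtain k where k: "k < length Q" "cost (take k Q) \<le> s" "s \<le> cost (take (Suc k) Q)"
    using gam_cover[OF ne, of s] ms by auto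
  obtain e a b where Qj: "Q ! j = (e, a, b)" by (cases "Q ! j") auto
  consider "k \<le> j" | "k = Suc j" | "Suc (Suc j) \<le> k" by linarith
  then show ?thesis
  proof cases
    case 1
    then have "cost (take (Suc k) Q) \<le> cost (take (Suc j) Q)" by (intro cost_take_le) simp
    then have "s \<le> cost (take (Suc j) Q)" using k by simp
    then have "s \<ge> cost (take j Q)" using j ms by linarith
    then have "gdist G (gam G x Q m) (gam G x Q s) \<le> \<bar>s - m\<bar>"
      using loc_dist_same[OF Q j(1) Qj j(2,3), of s] \<open>s \<le> cost (take (Suc j) Q)\<close> by blast
    then show ?thesis using ms by linarith
  next
    case 2
    have sj: "Suc j < length Q" using k 2 by simp
    have "s \<ge> cost (take (Suc j) Q)" "s \<le> cost (take (Suc (Suc j)) Q)" using k 2 by auto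
    then show ?thesis using loc_dist_next[OF Q y sj j(2,3)] by blast
  next
    case 3
    then have sj: "Suc j < length Q" using k by simp
    have "cost (take (Suc (Suc j)) Q) \<le> cost (take k Q)" using 3 by (intro cost_take_le)
    moreover have "cost (take (Suc (Suc j)) Q) = cost (take (Suc j) Q) + slen (Q ! Suc j)"
      using cost_take_Suc[OF sj] .
    moreover have "lmin Q \<le> slen (Q ! Suc j)" using lmin_le[OF sj] .
    ultimately have "s - m \<ge> lmin Q" using j k by linarith
    then show ?thesis using ms by simp
  qed
qed

lemma path_usc:
  assumes usc: "mg_usc G u" and Q: "spath G x Q y" and y: "y \<in> gpoints G" and nzQ: "list_all nz Q"
    and ne: "Q \<noteq> []"
  shows "uscI {0..cost Q} (\<lambda>s. u (gam G x Q s))"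
  unfolding uscI_def
proof (intro ballI allI impI)
  fix m and \<epsilon> :: real assume m: "m \<in> {0..cost Q}" and \<epsilon>: "\<epsilon> > 0"
  have gm: "gam G x Q m \<in> gpoints G" using gam_in[OF Q ne] m by auto
  obtain \<delta> where \<delta>: "\<delta> > 0" "\<forall>z\<in>gpoints G. gdist G (gam G x Q m) z < \<delta> \<longrightarrow> u z < u (gam G x Q m) + \<epsilon>"
    using usc gm \<epsilon> unfolding mg_usc_def by blast
  show "\<exists>d>0. \<forall>s\<in>{0..cost Q}. \<bar>s - m\<bar> < d \<longrightarrow> u (gam G x Q s) < u (gam G x Q m) + \<epsilon>"
  proof (intro exI[of _ "min \<delta> (lmin Q)"] conjI ballI impI)
    show "min \<delta> (lmin Q) > 0" using \<delta> lmin_pos[OF nzQ ne] by simp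
    fix s assume s: "s \<in> {0..cost Q}" "\<bar>s - m\<bar> < min \<delta> (lmin Q)"
    have gs: "gam G x Q s \<in> gpoints G" using gam_in[OF Q ne] s by auto
    have "gdist G (gam G x Q m) (gam G x Q s) \<le> \<bar>s - m\<bar>"
    proof (cases "m \<le> s")
      case True
      then show ?thesis using loc_dist[OF Q y nzQ ne, of m s] m s by auto
    next
      case False
      then have "gdist G (gam G x Q s) (gam G x Q m) \<le> m - s" using loc_dist[OF Q y nzQ ne, of s m] m s by auto
      then show ?thesis using False gdist_sym by (simp add: abs_if)
    qed
    moreover have "\<bar>s - m\<bar> < \<delta>" using s(2) by simp
    ultimately have "gdist G (gam G x Q m) (gam G x Q s) < \<delta>" by linarith
    then show "u (gam G x Q s) < u (gam G x Q m) + \<epsilon>" using \<delta>(2) gs by blast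
  qed
qed

lemma visc_edge:
  assumes vs: "viscosity_subsolution G u" and e: "e \<in> medges G" and t: "0 < t" "t < elen G e"
    and \<delta>: "\<delta> > 0" and C2: "C2_on {t - \<delta> <..< t + \<delta>} \<phi> \<phi>' \<phi>''" and eq: "\<phi> t = u (GE e t)"
    and le: "\<And>s. \<bar>s - t\<bar> < \<delta> \<Longrightarrow> 0 < s \<Longrightarrow> s < elen G e \<Longrightarrow> u (GE e s) \<le> \<phi> s"
  shows "\<phi>'' t \<ge> 0"
proof -
  have H: "\<forall>e\<in>medges G. \<forall>t. 0 < t \<and> t < elen G e \<longrightarrow>
        (\<forall>\<delta>>0. \<forall>\<phi> \<phi>' \<phi>''. C2_on {t - \<delta> <..< t + \<delta>} \<phi> \<phi>' \<phi>'' \<and> \<phi> t = u (GE e t) \<and>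
           (\<forall>s. \<bar>s - t\<bar> < \<delta> \<and> 0 < s \<and> s < elen G e \<longrightarrow> u (GE e s) \<le> \<phi> s)
           \<longrightarrow> \<phi>'' t \<ge> 0)"
    using vs unfolding viscosity_subsolution_def by (elim conjE)
  have le': "\<forall>s. \<bar>s - t\<bar> < \<delta> \<and> 0 < s \<and> s < elen G e \<longrightarrow> u (GE e s) \<le> \<phi> s" using le by blast
  show ?thesis using H[rule_format, OF e conjI[OF t] \<delta> conjI[OF C2 conjI[OF eq le']]] .
qed

lemma C2_quad:
  fixes m \<sigma> c0 qa qb qc K :: real
  shows "C2_on I (\<lambda>t. qa + qb * (m + \<sigma> * (t - c0)) + qc * (m + \<sigma> * (t - c0))\<^sup>2 - K * (t - c0)\<^sup>2)
     (\<lambda>t. qb * \<sigma> + 2 * qc * (m + \<sigma> * (t - c0)) * \<sigma> - 2 * K * (t - c0))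
     (\<lambda>t. 2 * qc * \<sigma> * \<sigma> - 2 * K)"
  unfolding C2_on_def
  by (auto intro!: derivative_eq_intros continuous_intros simp: power2_eq_square algebra_simps)

end

context mg begin

lemma tau_range:
  assumes "j \<le> length Q"
  shows "0 \<le> cost (take j Q)" "cost (take j Q) \<le> cost Q"
  using cost_nonneg[of "take j Q"] cost_take_le[OF assms, of Q] by auto

lemma H3:
  assumes vs: "viscosity_subsolution G u" and Q: "spath G x Q y" and nzQ: "list_all nz Q" and ne: "Q \<noteq> []"
    and m: "m \<in> {0<..<cost Q}" "m \<notin> Tset Q" and r: "r > 0"
    and test: "\<forall>s\<in>{0..cost Q}. \<bar>s - m\<bar> < r \<longrightarrow> u (gam G x Q s) \<le> qa + qb * s + qc * s\<^sup>2"
    and eqm: "u (gam G x Q m) = qa + qb * m + qc * m\<^sup>2"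
  shows "qc \<ge> 0"
proof -
  obtain j where j: "j < length Q" "cost (take j Q) \<le> m" "m \<le> cost (take (Suc j) Q)"
    using gam_cover[OF ne, of m] m by auto
  obtain e a b where Qj: "Q ! j = (e, a, b)" by (cases "Q ! j") auto
  have eab: "e \<in> medges G" "a \<in> {0..elen G e}" "b \<in> {0..elen G e}" using spath_nth[OF Q j(1) Qj] by auto
  have ab: "a \<noteq> b" using nzQ j(1) Qj unfolding list_all_length nz_def by (metis fst_conv snd_conv)
  have sl: "cost (take (Suc j) Q) = cost (take j Q) + \<bar>b - a\<bar>" using cost_take_Suc[OF j(1)] Qj by (simp add: slen_def)
  define \<tau> where "\<tau> = cost (take j Q)"
  have lt1: "\<tau> < m"
  proof (cases j)
    case 0 then show ?thesis using m unfolding \<tau>_def by simp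
  next
    case (Suc j')
    then have "cost (take j Q) \<in> Tset Q" unfolding Tset_def using j by auto
    then show ?thesis using m j unfolding \<tau>_def by (metis order_le_less)
  qed
  have lt2: "m < \<tau> + \<bar>b - a\<bar>"
  proof (cases "Suc j < length Q")
    case True
    then have "cost (take (Suc j) Q) \<in> Tset Q" unfolding Tset_def by auto
    then show ?thesis using m j sl unfolding \<tau>_def by (metis order_le_less)
  next
    case False
    then have "Suc j = length Q" using j by simp
    then have "cost (take (Suc j) Q) = cost Q" by simp
    then show ?thesis using m sl unfolding \<tau>_def by simp
  qed
  define \<sigma> where "\<sigma> = sgn (b - a)"
  have \<sigma>\<sigma>: "\<sigma> * \<sigma> = 1" unfolding \<sigma>_def using sgn_sq[OF ab] .
  have abs\<sigma>: "\<bar>\<sigma> * z\<bar> = \<bar>z\<bar>" for z unfolding \<sigma>_def using ab by (cases "a < b") (auto simp: sgn_if)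
  define c0 where "c0 = a + \<sigma> * (m - \<tau>)"
  have c0: "0 < c0" "c0 < elen G e" using strict_between[OF eab(2,3), of "m - \<tau>"] lt1 lt2 unfolding c0_def \<sigma>_def by auto
  define \<delta> where "\<delta> = min r (min (m - \<tau>) (\<tau> + \<bar>b - a\<bar> - m))"
  have \<delta>: "\<delta> > 0" unfolding \<delta>_def using r lt1 lt2 by simp
  have "2 * qc * \<sigma> * \<sigma> - 2 * 0 \<ge> 0"
  proof (rule visc_edge[OF vs eab(1) c0 \<delta> C2_quad])
    have "gam G x Q m = gpos G e c0" unfolding c0_def \<sigma>_def \<tau>_def using gam_seg'[OF Q j(1) Qj j(2,3)] by simp
    also have "\<dots> = GE e c0" using c0 gpos_int by simp
    finally show "qa + qb * (m + \<sigma> * (c0 - c0)) + qc * (m + \<sigma> * (c0 - c0))\<^sup>2 - 0 * (c0 - c0)\<^sup>2 = u (GE e c0)"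
      using eqm by simp
  next
    fix s assume s: "\<bar>s - c0\<bar> < \<delta>" "0 < s" "s < elen G e"
    define s' where "s' = m + \<sigma> * (s - c0)"
    have ds: "\<bar>s' - m\<bar> = \<bar>s - c0\<bar>" unfolding s'_def using abs\<sigma> by simp
    have s'r: "\<tau> \<le> s'" "s' \<le> \<tau> + \<bar>b - a\<bar>" "\<bar>s' - m\<bar> < r" using ds s(1) unfolding \<delta>_def by (auto simp: abs_less_iff)
    have s'D: "s' \<in> {0..cost Q}" using s'r tau_range[of j Q] tau_range[of "Suc j" Q] j sl unfolding \<tau>_def by auto
    have "gam G x Q s' = gpos G e (a + \<sigma> * (s' - \<tau>))" unfolding \<sigma>_def \<tau>_def
      using gam_seg'[OF Q j(1) Qj] s'r sl unfolding \<tau>_def by simp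
    also have "a + \<sigma> * (s' - \<tau>) = s" unfolding s'_def c0_def
      by (simp add: algebra_simps \<sigma>\<sigma> mult.assoc[symmetric])
    also have "gpos G e s = GE e s" using s gpos_int by simp
    finally have "u (GE e s) = u (gam G x Q s')" by simp
    also have "\<dots> \<le> qa + qb * s' + qc * s'\<^sup>2" using test s'D s'r by blast
    finally show "u (GE e s) \<le> qa + qb * (m + \<sigma> * (s - c0)) + qc * (m + \<sigma> * (s - c0))\<^sup>2 - 0 * (s - c0)\<^sup>2"
      unfolding s'_def by simp
  qed
  then show ?thesis using \<sigma>\<sigma> by (simp add: mult.assoc)
qed

end

context mg begin

lemma H4same:
  assumes vs: "viscosity_subsolution G u" and Q: "spath G x Q y" and nzQ: "list_all nz Q"
    and i: "Suc i < length Q" and Qi: "Q ! i = (e, a1, b1)" and QSi: "Q ! Suc i = (e, a2, b2)"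
    and nb: "sgn (b1 - a1) = sgn (b2 - a2)"
    and m: "m = cost (take (Suc i) Q)" and r: "r > 0" and \<eta>: "\<eta> > 0"
    and test: "\<forall>s\<in>{0..cost Q}. \<bar>s - m\<bar> < r \<longrightarrow> u (gam G x Q s) \<le> qa + qb * s + qc * s\<^sup>2 - \<eta> * \<bar>s - m\<bar>"
    and eqm: "u (gam G x Q m) = qa + qb * m + qc * m\<^sup>2"
  shows False
proof -
  have i': "i < length Q" using i by simp
  have eab1: "e \<in> medges G" "a1 \<in> {0..elen G e}" "b1 \<in> {0..elen G e}" using spath_nth[OF Q i' Qi] by auto
  have eab2: "a2 \<in> {0..elen G e}" "b2 \<in> {0..elen G e}" using spath_nth[OF Q i QSi] by auto
  have b1a2: "b1 = a2" using gpos_inj[OF eab1(1) spath_junc[OF Q i Qi QSi]] .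
  have nz1: "a1 \<noteq> b1" using nzQ i' Qi unfolding list_all_length nz_def by (metis fst_conv snd_conv)
  have nz2: "a2 \<noteq> b2" using nzQ i QSi unfolding list_all_length nz_def by (metis fst_conv snd_conv)
  define \<tau> where "\<tau> = cost (take i Q)"
  define lA where "lA = \<bar>b1 - a1\<bar>"
  define lB where "lB = \<bar>b2 - a2\<bar>"
  have l1: "lA > 0" "lB > 0" unfolding lA_def lB_def using nz1 nz2 by auto
  have m1: "m = \<tau> + lA" unfolding m \<tau>_def lA_def using cost_take_Suc[OF i'] Qi by (simp add: slen_def)
  have m2: "cost (take (Suc (Suc i)) Q) = m + lB" unfolding m lB_def using cost_take_Suc[OF i] QSi by (simp add: slen_def)
  define \<sigma> where "\<sigma> = sgn (b1 - a1)"
  have \<sigma>\<sigma>: "\<sigma> * \<sigma> = 1" unfolding \<sigma>_def using sgn_sq[OF nz1] .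
  have abs\<sigma>: "\<bar>\<sigma> * z\<bar> = \<bar>z\<bar>" for z unfolding \<sigma>_def using nz1 by (cases "a1 < b1") (auto simp: sgn_if)
  have b1int: "0 < b1" "b1 < elen G e"
  proof -
    have "(a1 < b1 \<and> a2 < b2) \<or> (b1 < a1 \<and> b2 < a2)" using nb nz1 nz2 by (auto simp: sgn_if split: if_splits)
    then show "0 < b1" "b1 < elen G e" using eab1 eab2 b1a2 by auto
  qed
  have b1eq: "b1 = a1 + \<sigma> * lA" unfolding \<sigma>_def lA_def using sgn_abs_cancel by simp
  have gamc: "gam G x Q s = gpos G e (b1 + \<sigma> * (s - m))" if s: "\<tau> \<le> s" "s \<le> m + lB" for s
  proof (cases "s \<le> m")
    case True
    have "gam G x Q s = gpos G e (a1 + \<sigma> * (s - \<tau>))" unfolding \<sigma>_def \<tau>_def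
      using gam_seg'[OF Q i' Qi] s True m1 unfolding \<tau>_def by (simp add: m)
    also have "a1 + \<sigma> * (s - \<tau>) = b1 + \<sigma> * (s - m)" using b1eq m1 by (simp add: algebra_simps)
    finally show ?thesis .
  next
    case False
    have "gam G x Q s = gpos G e (a2 + sgn (b2 - a2) * (s - m))"
      using gam_seg'[OF Q i QSi, of s] s False m2 by (simp add: m)
    then show ?thesis using b1a2 nb unfolding \<sigma>_def by simp
  qed
  define K where "K = \<bar>qc\<bar> + 1"
  have K: "K > 0" "qc < K" unfolding K_def by auto
  define \<delta> where "\<delta> = min r (min lA (min lB (\<eta> / K)))"
  have \<delta>: "\<delta> > 0" unfolding \<delta>_def using r l1 \<eta> K by simp
  have "2 * qc * \<sigma> * \<sigma> - 2 * K \<ge> 0"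
  proof (rule visc_edge[OF vs eab1(1) b1int \<delta> C2_quad])
    have "gam G x Q m = gpos G e b1" using gamc[of m] m1 l1 by simp
    also have "\<dots> = GE e b1" using b1int gpos_int by simp
    finally show "qa + qb * (m + \<sigma> * (b1 - b1)) + qc * (m + \<sigma> * (b1 - b1))\<^sup>2 - K * (b1 - b1)\<^sup>2 = u (GE e b1)"
      using eqm by simp
  next
    fix t assume t: "\<bar>t - b1\<bar> < \<delta>" "0 < t" "t < elen G e"
    define s' where "s' = m + \<sigma> * (t - b1)"
    have ds: "\<bar>s' - m\<bar> = \<bar>t - b1\<bar>" unfolding s'_def using abs\<sigma> by simp
    have s'r: "\<tau> \<le> s'" "s' \<le> m + lB" "\<bar>s' - m\<bar> < r" using ds t(1) m1 unfolding \<delta>_def by (auto simp: abs_less_iff)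
    have s'D: "s' \<in> {0..cost Q}"
      using s'r tau_range[of i Q] tau_range[of "Suc (Suc i)" Q] i m2 unfolding \<tau>_def by auto
    have "gam G x Q s' = gpos G e (b1 + \<sigma> * (s' - m))" using gamc s'r by simp
    also have "b1 + \<sigma> * (s' - m) = t" unfolding s'_def by (simp add: algebra_simps \<sigma>\<sigma> mult.assoc[symmetric])
    also have "gpos G e t = GE e t" using t gpos_int by simp
    finally have "u (GE e t) = u (gam G x Q s')" by simp
    also have "\<dots> \<le> qa + qb * s' + qc * s'\<^sup>2 - \<eta> * \<bar>s' - m\<bar>" using test s'D s'r by blast
    also have "\<dots> \<le> qa + qb * s' + qc * s'\<^sup>2 - K * (t - b1)\<^sup>2"
    proof -
      have "K * \<bar>t - b1\<bar> \<le> \<eta>" using t(1) K unfolding \<delta>_def by (simp add: field_simps)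
      then have "K * \<bar>t - b1\<bar> * \<bar>t - b1\<bar> \<le> \<eta> * \<bar>t - b1\<bar>" by (simp add: mult_right_mono)
      then have "K * (t - b1)\<^sup>2 \<le> \<eta> * \<bar>s' - m\<bar>" using ds by (simp add: power2_eq_square abs_mult_self_eq mult.assoc)
      then show ?thesis by linarith
    qed
    finally show "u (GE e t) \<le> qa + qb * (m + \<sigma> * (t - b1)) + qc * (m + \<sigma> * (t - b1))\<^sup>2 - K * (t - b1)\<^sup>2"
      unfolding s'_def by simp
  qed
  then show False using \<sigma>\<sigma> K by (simp add: mult.assoc)
qed

end

context mg begin

lemma seg_end_cpt:
  assumes e: "e \<in> medges G" and v: "v = esrc G e \<or> v = etgt G e" and ab: "a \<in> {0..elen G e}" "b \<in> {0..elen G e}"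
    and nz: "a \<noteq> b" and bv: "b = cv G e v" and d: "0 \<le> d" "d \<le> \<bar>b - a\<bar>"
  shows "a + sgn (b - a) * (\<bar>b - a\<bar> - d) = cpt e v d"
proof (cases "v = esrc G e")
  case True
  then have "b = 0" using bv unfolding cv_def by simp
  then have "a > 0" using ab nz by auto
  then show ?thesis using True \<open>b = 0\<close> unfolding cpt_def by (simp add: sgn_if)
next
  case False
  then have "b = elen G e" using bv unfolding cv_def by simp
  then have "a < elen G e" using ab nz by auto
  then show ?thesis using False \<open>b = elen G e\<close> unfolding cpt_def by (simp add: sgn_if)
qed

lemma seg_start_cpt:
  assumes e: "e \<in> medges G" and ab: "a \<in> {0..elen G e}" "b \<in> {0..elen G e}"
    and nz: "a \<noteq> b" and av: "a = cv G e v"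
  shows "a + sgn (b - a) * d = cpt e v d"
proof (cases "v = esrc G e")
  case True
  then have "a = 0" using av unfolding cv_def by simp
  then have "b > 0" using ab nz by auto
  then show ?thesis using True \<open>a = 0\<close> unfolding cpt_def by (simp add: sgn_if)
next
  case False
  then have "a = elen G e" using av unfolding cv_def by simp
  then have "b < elen G e" using ab nz by auto
  then show ?thesis using False \<open>a = elen G e\<close> unfolding cpt_def by (simp add: sgn_if)
qed

lemma cpt_inv: "cpt e v (cpt e v r) = r" unfolding cpt_def by simp

lemma cpt_range: "r \<in> {0..elen G e} \<Longrightarrow> cpt e v r \<in> {0..elen G e}" unfolding cpt_def by auto

lemma cpt_deriv:
  assumes "\<And>d. (f has_real_derivative f' d) (at d)"
  shows "((\<lambda>r. f (cpt e v r)) has_real_derivative (if v = esrc G e then 1 else -1) * f' (cpt e v r)) (at r)"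
proof (cases "v = esrc G e")
  case True
  then show ?thesis unfolding cpt_def using assms by simp
next
  case False
  have "((\<lambda>r. f (elen G e - r)) has_real_derivative f' (elen G e - r) * (- 1)) (at r)"
    by (rule DERIV_chain2[where f=f and g="\<lambda>r. elen G e - r"]) (use assms in \<open>auto intro!: derivative_eq_intros\<close>)
  then show ?thesis unfolding cpt_def using False by simp
qed

lemma cpt_cont:
  fixes f :: "real \<Rightarrow> real"
  assumes "continuous_on UNIV f"
  shows "continuous_on S (\<lambda>r. (if v = esrc G e then 1 else -1) * f (cpt e v r))"
proof -
  have "continuous_on S (\<lambda>r. f (cpt e v r))"
  proof (rule continuous_on_compose2[OF assms])
    show "continuous_on S (cpt e v)" unfolding cpt_def by (cases "v = esrc G e") (auto intro!: continuous_intros)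
  qed auto
  then show ?thesis by (rule continuous_on_mult_left)
qed

lemma ingoing_cpt:
  assumes e: "e \<in> medges G" and v: "v = esrc G e \<or> v = etgt G e"
  shows "ingoing G e v (\<lambda>r. (if v = esrc G e then 1 else -1) * f (cpt e v r)) = f 0"
  using v e_ne[OF e] unfolding ingoing_def cpt_def by auto

lemma quad_bound:
  fixes qa qb qc x M :: real
  assumes "\<bar>x\<bar> \<le> M"
  shows "qa + qb * x + qc * x\<^sup>2 \<ge> - (\<bar>qa\<bar> + \<bar>qb\<bar> * M + \<bar>qc\<bar> * M\<^sup>2)"
proof -
  have M: "M \<ge> 0" using assms by linarith
  have "\<bar>qb * x\<bar> \<le> \<bar>qb\<bar> * M" using assms by (simp add: abs_mult mult_left_mono)
  moreover have "x\<^sup>2 \<le> M\<^sup>2" using assms M by (metis abs_le_square_iff abs_of_nonneg)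
  then have "\<bar>qc * x\<^sup>2\<bar> \<le> \<bar>qc\<bar> * M\<^sup>2" by (simp add: abs_mult mult_left_mono)
  ultimately show ?thesis by (smt (verit) abs_ge_minus_self)
qed

end

context mg begin

lemma H4vert:
  assumes vs: "viscosity_subsolution G u" and Q: "spath G x Q y" and nzQ: "list_all nz Q"
    and i: "Suc i < length Q" and Qi: "Q ! i = (e1, a1, b1)" and QSi: "Q ! Suc i = (e2, a2, b2)"
    and e12: "e1 \<noteq> e2"
    and m: "m = cost (take (Suc i) Q)" and r: "r > 0" and \<eta>: "\<eta> > 0"
    and test: "\<forall>s\<in>{0..cost Q}. \<bar>s - m\<bar> < r \<longrightarrow> u (gam G x Q s) \<le> qa + qb * s + qc * s\<^sup>2 - \<eta> * \<bar>s - m\<bar>"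
    and eqm: "u (gam G x Q m) = qa + qb * m + qc * m\<^sup>2"
  shows False
proof -
  have i': "i < length Q" using i by simp
  have eab1: "e1 \<in> medges G" "a1 \<in> {0..elen G e1}" "b1 \<in> {0..elen G e1}" using spath_nth[OF Q i' Qi] by auto
  have eab2: "e2 \<in> medges G" "a2 \<in> {0..elen G e2}" "b2 \<in> {0..elen G e2}" using spath_nth[OF Q i QSi] by auto
  have nz1: "a1 \<noteq> b1" using nzQ i' Qi unfolding list_all_length nz_def by (metis fst_conv snd_conv)
  have nz2: "a2 \<noteq> b2" using nzQ i QSi unfolding list_all_length nz_def by (metis fst_conv snd_conv)
  have junc: "gpos G e1 b1 = gpos G e2 a2" using spath_junc[OF Q i Qi QSi] .
  obtain v where v: "gpos G e1 b1 = GV v" using gpos_two[OF eab1(1) eab2(1) e12 junc] by blast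
  have v1: "(b1 = 0 \<and> v = esrc G e1) \<or> (b1 = elen G e1 \<and> v = etgt G e1)" using gpos_eq_GV[OF eab1(1) v] .
  have v2: "(a2 = 0 \<and> v = esrc G e2) \<or> (a2 = elen G e2 \<and> v = etgt G e2)" using gpos_eq_GV[OF eab2(1)] v junc by simp
  have ve1: "v = esrc G e1 \<or> v = etgt G e1" and ve2: "v = esrc G e2 \<or> v = etgt G e2" using v1 v2 by auto
  have b1v: "b1 = cv G e1 v" using v1 e_ne[OF eab1(1)] unfolding cv_def by auto
  have a2v: "a2 = cv G e2 v" using v2 e_ne[OF eab2(1)] unfolding cv_def by auto
  have vV: "v \<in> mverts G" using ve1 e_src[OF eab1(1)] e_tgt[OF eab1(1)] by auto
  have inc: "e1 \<in> inc_edges G v" "e2 \<in> inc_edges G v" using ve1 ve2 eab1(1) eab2(1) unfolding inc_edges_def by auto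
  have card: "card (inc_edges G v) > 1"
  proof -
    have fin: "finite (inc_edges G v)" using finE unfolding inc_edges_def by simp
    have "card {e1, e2} \<le> card (inc_edges G v)" using inc by (intro card_mono[OF fin]) auto
    then show ?thesis using e12 by simp
  qed
  define \<tau> where "\<tau> = cost (take i Q)"
  define lA where "lA = \<bar>b1 - a1\<bar>"
  define lB where "lB = \<bar>b2 - a2\<bar>"
  have lpos: "lA > 0" "lB > 0" unfolding lA_def lB_def using nz1 nz2 by auto
  have m1: "m = \<tau> + lA" unfolding m \<tau>_def lA_def using cost_take_Suc[OF i'] Qi by (simp add: slen_def)
  have m2: "cost (take (Suc (Suc i)) Q) = m + lB" unfolding m lB_def using cost_take_Suc[OF i] QSi by (simp add: slen_def)
  have \<tau>0: "0 \<le> \<tau>" unfolding \<tau>_def by (rule cost_nonneg)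
  have mBD: "m + lB \<le> cost Q" using m2 cost_take_le[of "Suc (Suc i)" "length Q" Q] i by simp
  have gamL: "gam G x Q (m - d) = gpos G e1 (cpt e1 v d)" if d: "0 \<le> d" "d \<le> lA" for d
  proof -
    have "gam G x Q (m - d) = gpos G e1 (a1 + sgn (b1 - a1) * (m - d - cost (take i Q)))"
      using gam_seg'[OF Q i' Qi, of "m - d"] d m1 m unfolding \<tau>_def by simp
    also have "a1 + sgn (b1 - a1) * (m - d - cost (take i Q)) = a1 + sgn (b1 - a1) * (\<bar>b1 - a1\<bar> - d)"
      using m1 unfolding \<tau>_def lA_def by simp
    also have "\<dots> = cpt e1 v d" using seg_end_cpt[OF eab1(1) ve1 eab1(2,3) nz1 b1v] d unfolding lA_def by simp
    finally show ?thesis .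
  qed
  have gamR: "gam G x Q (m + d) = gpos G e2 (cpt e2 v d)" if d: "0 \<le> d" "d \<le> lB" for d
  proof -
    have "gam G x Q (m + d) = gpos G e2 (a2 + sgn (b2 - a2) * (m + d - cost (take (Suc i) Q)))"
      using gam_seg'[OF Q i QSi, of "m + d"] d m2 m by simp
    also have "\<dots> = gpos G e2 (cpt e2 v d)" using seg_start_cpt[OF eab2(1) eab2(2,3) nz2 a2v] m by simp
    finally show ?thesis .
  qed
  have c0: "cpt e2 v 0 = cv G e2 v" unfolding cpt_def cv_def by simp
  have gm: "gam G x Q m = GV v" using gamR[of 0] lpos cv_gpos[OF eab2(1) ve2] c0 by simp
  have usc: "mg_usc G u" using vs unfolding viscosity_subsolution_def by simp
  obtain B1 where B1: "\<forall>s\<in>{0..elen G e1}. u (gpos G e1 s) \<le> B1" using usc_edge_bdd[OF usc eab1(1)] by blast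
  obtain B2 where B2: "\<forall>s\<in>{0..elen G e2}. u (gpos G e2 s) \<le> B2" using usc_edge_bdd[OF usc eab2(1)] by blast
  define Lt where "Lt = elen G e1 + elen G e2"
  define M where "M = \<bar>m\<bar> + Lt"
  define Cq where "Cq = \<bar>qa\<bar> + \<bar>qb\<bar> * M + \<bar>qc\<bar> * M\<^sup>2 + \<eta> * Lt"
  define \<rho> where "\<rho> = min r (min lA lB)"
  define Bb where "Bb = \<bar>B1\<bar> + \<bar>B2\<bar>"
  define K where "K = (Bb + Cq) / \<rho>\<^sup>2 + 1"
  have Lt: "Lt \<ge> elen G e1" "Lt \<ge> elen G e2" "Lt \<ge> 0" unfolding Lt_def using e_pos[OF eab1(1)] e_pos[OF eab2(1)] by auto
  have \<rho>: "\<rho> > 0" unfolding \<rho>_def using r lpos by simp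
  have Cq0: "Cq \<ge> 0" unfolding Cq_def M_def using \<eta> Lt by (intro add_nonneg_nonneg mult_nonneg_nonneg) auto
  have Bb0: "Bb \<ge> 0" unfolding Bb_def by simp
  have K0: "K > 0"
  proof -
    have "(Bb + Cq) / \<rho>\<^sup>2 \<ge> 0" using Cq0 Bb0 by simp
    then show ?thesis unfolding K_def by linarith
  qed
  have K\<rho>: "K * \<rho>\<^sup>2 \<ge> Bb + Cq" unfolding K_def using \<rho> by (simp add: field_simps)
  define Q1 where "Q1 d = qa + qb * (m - d) + qc * (m - d)\<^sup>2 - \<eta> * d + K * d\<^sup>2" for d
  define Q2 where "Q2 d = qa + qb * (m + d) + qc * (m + d)\<^sup>2 - \<eta> * d + K * d\<^sup>2" for d
  define Q1' where "Q1' d = - qb - 2 * qc * (m - d) - \<eta> + 2 * K * d" for d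
  define Q2' where "Q2' d = qb + 2 * qc * (m + d) - \<eta> + 2 * K * d" for d
  have dQ1: "(Q1 has_real_derivative Q1' d) (at d)" for d
    unfolding Q1_def Q1'_def by (auto intro!: derivative_eq_intros simp: power2_eq_square algebra_simps)
  have dQ2: "(Q2 has_real_derivative Q2' d) (at d)" for d
    unfolding Q2_def Q2'_def by (auto intro!: derivative_eq_intros simp: power2_eq_square algebra_simps)
  have cQ1: "continuous_on UNIV Q1'" unfolding Q1'_def by (intro continuous_intros)
  have cQ2: "continuous_on UNIV Q2'" unfolding Q2'_def by (intro continuous_intros)
  define \<Phi>1 where "\<Phi>1 r = Q1 (cpt e1 v r)" for r
  define \<Phi>2 where "\<Phi>2 r = Q2 (cpt e2 v r)" for r
  define \<Phi>1' where "\<Phi>1' r = (if v = esrc G e1 then 1 else -1) * Q1' (cpt e1 v r)" for r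
  define \<Phi>2' where "\<Phi>2' r = (if v = esrc G e2 then 1 else -1) * Q2' (cpt e2 v r)" for r
  define qm where "qm = qa + qb * m + qc * m\<^sup>2"
  have Q10: "Q1 0 = qm" "Q2 0 = qm" unfolding Q1_def Q2_def qm_def by simp_all
  define oth where "oth f = (if v = esrc G f then etgt G f else esrc G f)" for f
  have oth1: "oth e1 \<noteq> v" "{esrc G e1, etgt G e1} = {v, oth e1}" using ve1 e_ne[OF eab1(1)] unfolding oth_def by auto
  have oth2: "oth e2 \<noteq> v" "{esrc G e2, etgt G e2} = {v, oth e2}" using ve2 e_ne[OF eab2(1)] unfolding oth_def by auto
  have oth12: "oth e2 \<noteq> oth e1" using simple[OF eab1(1) eab2(1)] oth1 oth2 e12 by metis
  define \<phi> where "\<phi> p = (case p of GE f t \<Rightarrow> (if f = e1 then \<Phi>1 t else \<Phi>2 t)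
     | GV w \<Rightarrow> (if w = v then qm else if w = oth e1 then \<Phi>1 (cv G e1 w) else \<Phi>2 (cv G e2 w)))" for p
  have phi1: "\<phi> (gpos G e1 s) = \<Phi>1 s" if s: "s \<in> {0..elen G e1}" for s
  proof -
    consider "s = 0" | "s = elen G e1" | "0 < s \<and> s < elen G e1" using s by fastforce
    then show ?thesis
    proof cases
      case 1
      then show ?thesis using Q10 oth1 ve1 e_ne[OF eab1(1)] unfolding \<phi>_def \<Phi>1_def cpt_def oth_def cv_def
        by (cases "v = esrc G e1") auto
    next
      case 2
      then show ?thesis using Q10 oth1 ve1 e_ne[OF eab1(1)] gpos_tgt[OF eab1(1)] unfolding \<phi>_def \<Phi>1_def cpt_def oth_def cv_def
        by (cases "v = esrc G e1") auto
    next
      case 3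
      then show ?thesis using gpos_int[of s e1] unfolding \<phi>_def by simp
    qed
  qed
  have phi2: "\<phi> (gpos G e2 s) = \<Phi>2 s" if s: "s \<in> {0..elen G e2}" for s
  proof -
    consider "s = 0" | "s = elen G e2" | "0 < s \<and> s < elen G e2" using s by fastforce
    then show ?thesis
    proof cases
      case 1
      then show ?thesis using Q10 oth2 oth12 ve2 e_ne[OF eab2(1)] unfolding \<phi>_def \<Phi>2_def cpt_def cv_def
        by (cases "v = esrc G e2") (auto simp: oth_def)
    next
      case 2
      then show ?thesis using Q10 oth2 oth12 ve2 e_ne[OF eab2(1)] gpos_tgt[OF eab2(1)] unfolding \<phi>_def \<Phi>2_def cpt_def cv_def
        by (cases "v = esrc G e2") (auto simp: oth_def)
    next
      case 3
      then show ?thesis using gpos_int[of s e2] e12 unfolding \<phi>_def by simp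
    qed
  qed
  have C1a: "C1_closed (elen G e1) (\<lambda>s. \<phi> (gpos G e1 s)) \<Phi>1'"
    unfolding C1_closed_def
  proof (intro conjI ballI)
    fix s assume s: "s \<in> {0..elen G e1}"
    have "(\<Phi>1 has_real_derivative \<Phi>1' s) (at s within {0..elen G e1})"
      unfolding \<Phi>1_def \<Phi>1'_def by (rule has_field_derivative_at_within[OF cpt_deriv[OF dQ1]])
    then show "((\<lambda>s. \<phi> (gpos G e1 s)) has_real_derivative \<Phi>1' s) (at s within {0..elen G e1})"
      by (rule has_field_derivative_transform_within[of _ _ _ _ 1]) (use s phi1 in auto)
  next
    show "continuous_on {0..elen G e1} \<Phi>1'" unfolding \<Phi>1'_def by (rule cpt_cont[OF cQ1])
  qed
  have C1b: "C1_closed (elen G e2) (\<lambda>s. \<phi> (gpos G e2 s)) \<Phi>2'"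
    unfolding C1_closed_def
  proof (intro conjI ballI)
    fix s assume s: "s \<in> {0..elen G e2}"
    have "(\<Phi>2 has_real_derivative \<Phi>2' s) (at s within {0..elen G e2})"
      unfolding \<Phi>2_def \<Phi>2'_def by (rule has_field_derivative_at_within[OF cpt_deriv[OF dQ2]])
    then show "((\<lambda>s. \<phi> (gpos G e2 s)) has_real_derivative \<Phi>2' s) (at s within {0..elen G e2})"
      by (rule has_field_derivative_transform_within[of _ _ _ _ 1]) (use s phi2 in auto)
  next
    show "continuous_on {0..elen G e2} \<Phi>2'" unfolding \<Phi>2'_def by (rule cpt_cont[OF cQ2])
  qed
  have eqv: "\<phi> (GV v) = u (GV v)" unfolding \<phi>_def using eqm gm unfolding qm_def by simp
  have far: "Bb \<le> Q d" if Qd: "Q d = qa + qb * (m + \<sigma> * d) + qc * (m + \<sigma> * d)\<^sup>2 - \<eta> * d + K * d\<^sup>2"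
    and \<sigma>: "\<bar>\<sigma>\<bar> = 1" and d: "\<rho> \<le> d" "d \<le> Lt" for Q :: "real \<Rightarrow> real" and d \<sigma>
  proof -
    have ad: "\<bar>\<sigma> * d\<bar> = d" using \<sigma> d \<rho> by (simp add: abs_mult)
    have "\<bar>m + \<sigma> * d\<bar> \<le> \<bar>m\<bar> + \<bar>\<sigma> * d\<bar>" by (rule abs_triangle_ineq)
    then have "\<bar>m + \<sigma> * d\<bar> \<le> M" unfolding M_def using ad d by linarith
    then have "qa + qb * (m + \<sigma> * d) + qc * (m + \<sigma> * d)\<^sup>2 \<ge> - (\<bar>qa\<bar> + \<bar>qb\<bar> * M + \<bar>qc\<bar> * M\<^sup>2)"
      by (rule quad_bound)
    moreover have "\<eta> * d \<le> \<eta> * Lt" using d \<eta> by simp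
    moreover have "K * \<rho>\<^sup>2 \<le> K * d\<^sup>2" using d \<rho> K0 by (intro mult_left_mono power_mono) auto
    ultimately show ?thesis using Qd K\<rho> unfolding Cq_def by linarith
  qed
  have le1: "\<forall>s\<in>{0..elen G e1}. u (gpos G e1 s) \<le> \<phi> (gpos G e1 s)"
  proof
    fix s assume s: "s \<in> {0..elen G e1}"
    define d where "d = cpt e1 v s"
    have d: "d \<in> {0..elen G e1}" unfolding d_def using cpt_range[OF s] .
    have sd: "s = cpt e1 v d" unfolding d_def cpt_inv ..
    have "\<phi> (gpos G e1 s) = Q1 d" using phi1[OF s] unfolding \<Phi>1_def d_def .
    moreover have "u (gpos G e1 s) \<le> Q1 d"
    proof (cases "d < \<rho>")
      case True
      then have dA: "d \<le> lA" "d < r" unfolding \<rho>_def by auto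
      have "gpos G e1 s = gam G x Q (m - d)" using gamL[of d] d dA sd by simp
      moreover have "m - d \<in> {0..cost Q}" using m1 \<tau>0 dA d mBD lpos by auto
      moreover have "\<bar>(m - d) - m\<bar> < r" using dA d by auto
      ultimately have "u (gpos G e1 s) \<le> qa + qb * (m - d) + qc * (m - d)\<^sup>2 - \<eta> * \<bar>(m - d) - m\<bar>"
        using test by metis
      also have "\<dots> \<le> Q1 d" unfolding Q1_def using d K0 by simp
      finally show ?thesis .
    next
      case False
      have "Bb \<le> Q1 d" by (rule far[of Q1 d "-1"]) (use False d Lt in \<open>auto simp: Q1_def\<close>)
      moreover have "u (gpos G e1 s) \<le> Bb" using B1 s unfolding Bb_def by (smt (verit) abs_ge_self abs_not_less_zero)
      ultimately show ?thesis by simp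
    qed
    ultimately show "u (gpos G e1 s) \<le> \<phi> (gpos G e1 s)" by simp
  qed
  have le2: "\<forall>s\<in>{0..elen G e2}. u (gpos G e2 s) \<le> \<phi> (gpos G e2 s)"
  proof
    fix s assume s: "s \<in> {0..elen G e2}"
    define d where "d = cpt e2 v s"
    have d: "d \<in> {0..elen G e2}" unfolding d_def using cpt_range[OF s] .
    have sd: "s = cpt e2 v d" unfolding d_def cpt_inv ..
    have "\<phi> (gpos G e2 s) = Q2 d" using phi2[OF s] unfolding \<Phi>2_def d_def .
    moreover have "u (gpos G e2 s) \<le> Q2 d"
    proof (cases "d < \<rho>")
      case True
      then have dB: "d \<le> lB" "d < r" unfolding \<rho>_def by auto
      have "gpos G e2 s = gam G x Q (m + d)" using gamR[of d] d dB sd by simp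
      moreover have "m + d \<in> {0..cost Q}" using m1 \<tau>0 dB d mBD lpos by auto
      moreover have "\<bar>(m + d) - m\<bar> < r" using dB d by auto
      ultimately have "u (gpos G e2 s) \<le> qa + qb * (m + d) + qc * (m + d)\<^sup>2 - \<eta> * \<bar>(m + d) - m\<bar>"
        using test by metis
      also have "\<dots> \<le> Q2 d" unfolding Q2_def using d K0 by simp
      finally show ?thesis .
    next
      case False
      have "Bb \<le> Q2 d" by (rule far[of Q2 d 1]) (use False d Lt in \<open>auto simp: Q2_def\<close>)
      moreover have "u (gpos G e2 s) \<le> Bb" using B2 s unfolding Bb_def by (smt (verit) abs_ge_self abs_not_less_zero)
      ultimately show ?thesis by simp
    qed
    ultimately show "u (gpos G e2 s) \<le> \<phi> (gpos G e2 s)" by simp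
  qed
  have H: "\<forall>v\<in>mverts G. card (inc_edges G v) > 1 \<longrightarrow>
        (\<forall>e\<in>inc_edges G v. \<forall>e'\<in>inc_edges G v. e \<noteq> e' \<longrightarrow>
          (\<forall>\<phi> \<phi>e' \<phi>f'.
             C1_closed (elen G e) (\<lambda>s. \<phi> (gpos G e s)) \<phi>e' \<and>
             C1_closed (elen G e') (\<lambda>s. \<phi> (gpos G e' s)) \<phi>f' \<and>
             \<phi> (GV v) = u (GV v) \<and>
             (\<forall>s\<in>{0..elen G e}. u (gpos G e s) \<le> \<phi> (gpos G e s)) \<and>
             (\<forall>s\<in>{0..elen G e'}. u (gpos G e' s) \<le> \<phi> (gpos G e' s))
             \<longrightarrow> ingoing G e v \<phi>e' + ingoing G e' v \<phi>f' \<ge> 0))"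
    using vs unfolding viscosity_subsolution_def by (elim conjE)
  have "ingoing G e1 v \<Phi>1' + ingoing G e2 v \<Phi>2' \<ge> 0"
    using H[rule_format, OF vV card inc(1) inc(2) e12, of \<phi> \<Phi>1' \<Phi>2'] C1a C1b eqv le1 le2 by blast
  moreover have "ingoing G e1 v \<Phi>1' = Q1' 0" unfolding \<Phi>1'_def using ingoing_cpt[OF eab1(1) ve1] .
  moreover have "ingoing G e2 v \<Phi>2' = Q2' 0" unfolding \<Phi>2'_def using ingoing_cpt[OF eab2(1) ve2] .
  ultimately show False using \<eta> unfolding Q1'_def Q2'_def by simp
qed

end

context mg begin

lemma dir2:
  assumes vs: "viscosity_subsolution G u"
  shows "mg_convex G u"
  unfolding mg_convex_def
proof (intro ballI impI)
  fix x y z assume x: "x \<in> gpoints G" and y: "y \<in> gpoints G" and z: "z \<in> gpoints G"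
    and xyz: "x \<noteq> y \<and> on_min_path G x y z"
  obtain P1 where P1: "spath G x P1 z" "cost P1 = gdist G x z" using lemmaII[OF x z] by blast
  obtain P2 where P2: "spath G z P2 y" "cost P2 = gdist G z y" using lemmaII[OF z y] by blast
  define Q1 where "Q1 = filter nz P1"
  define Q2 where "Q2 = filter nz P2"
  define Q where "Q = Q1 @ Q2"
  have Q1: "spath G x Q1 z" "cost Q1 = gdist G x z" unfolding Q1_def
    using spath_filter[OF P1(1)] cost_filter[of P1] P1(2) by (blast, simp only:)
  have Q2: "spath G z Q2 y" "cost Q2 = gdist G z y" unfolding Q2_def
    using spath_filter[OF P2(1)] cost_filter[of P2] P2(2) by (blast, simp only:)
  have Q: "spath G x Q y" unfolding Q_def using spath_app[OF Q1(1) Q2(1)] .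
  have cQ: "cost Q = gdist G x y" unfolding Q_def cost_app Q1(2) Q2(2) using xyz unfolding on_min_path_def by simp
  have nzQ: "list_all nz Q" unfolding Q_def Q1_def Q2_def by (auto simp: list_all_iff)
  have ne: "Q \<noteq> []" using Q xyz by auto
  define D where "D = cost Q"
  have D: "D > 0"
  proof -
    have "D \<noteq> 0" unfolding D_def using nz_cost_zero[OF nzQ] ne by blast
    then show ?thesis unfolding D_def using cost_nonneg[of Q] by simp
  qed
  define s0 where "s0 = gdist G x z"
  have s0: "s0 \<in> {0..D}" unfolding s0_def D_def Q_def cost_app using Q1(2) Q2(2) cost_nonneg[of Q1] cost_nonneg[of Q2]
    by auto
  have gz: "gam G x Q s0 = z"
  proof -
    have "gam G x Q s0 = gam G x Q1 s0" unfolding Q_def using gam_app[of G x Q1 Q2 y s0] Q s0 Q1(2)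
      unfolding s0_def Q_def by simp
    also have "\<dots> = z" using gam_end[OF Q1(1)] Q1(2) unfolding s0_def by simp
    finally show ?thesis .
  qed
  have g0: "gam G x Q 0 = x" using gam_zero[OF Q] .
  have gD: "gam G x Q D = y" unfolding D_def using gam_end[OF Q] .
  have usc: "mg_usc G u" using vs unfolding viscosity_subsolution_def by simp
  have finT: "finite (Tset Q)" unfolding Tset_def by simp
  have TD: "Tset Q \<subseteq> {0<..<D}"
  proof
    fix t assume "t \<in> Tset Q"
    then obtain j where j: "0 < j" "j < length Q" "t = cost (take j Q)" unfolding Tset_def by auto
    have "cost (take 1 Q) \<le> t" using j cost_take_le[of 1 j Q] by simp
    moreover have "cost (take 1 Q) = cost (take 0 Q) + slen (Q ! 0)" using cost_take_Suc[of 0 Q] j ne by simp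
    moreover have "slen (Q ! 0) > 0" using nz_slen_pos[OF nzQ, of 0] ne by simp
    ultimately have "t > 0" by simp
    moreover have "cost (take (Suc j) Q) = t + slen (Q ! j)" using cost_take_Suc[OF j(2)] j by simp
    moreover have "cost (take (Suc j) Q) \<le> D" unfolding D_def using cost_take_le[of "Suc j" "length Q" Q] j by simp
    moreover have "slen (Q ! j) > 0" using nz_slen_pos[OF nzQ j(2)] .
    ultimately show "t \<in> {0<..<D}" by simp
  qed
  have main: "u (gam G x Q s0) \<le> ((D - s0) * u (gam G x Q 0) + s0 * u (gam G x Q D)) / D"
  proof (rule convex_from_local[OF D finT TD _ _ _ s0, where F = "\<lambda>s. u (gam G x Q s)"])
    show "uscI {0..D} (\<lambda>s. u (gam G x Q s))" unfolding D_def using path_usc[OF usc Q y nzQ ne] .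
  next
    fix m r a b c
    assume "m \<in> {0<..<D}" "m \<notin> Tset Q" "r > 0"
      "\<forall>s\<in>{0..D}. \<bar>s - m\<bar> < r \<longrightarrow> u (gam G x Q s) \<le> a + b * s + c * s\<^sup>2"
      "u (gam G x Q m) = a + b * m + c * m\<^sup>2"
    then show "c \<ge> 0" using H3[OF vs Q nzQ ne] unfolding D_def by blast
  next
    fix m r \<eta> a b c
    assume m: "m \<in> Tset Q" and r: "r > 0" and \<eta>: "\<eta> > 0"
      and test: "\<forall>s\<in>{0..D}. \<bar>s - m\<bar> < r \<longrightarrow> u (gam G x Q s) \<le> a + b * s + c * s\<^sup>2 - \<eta> * \<bar>s - m\<bar>"
      and eqm: "u (gam G x Q m) = a + b * m + c * m\<^sup>2"
    obtain j where j: "0 < j" "j < length Q" "m = cost (take j Q)" using m unfolding Tset_def by auto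
    obtain i where i: "j = Suc i" using j(1) by (cases j) auto
    have i': "Suc i < length Q" using j i by simp
    obtain e1 a1 b1 where Qi: "Q ! i = (e1, a1, b1)" by (cases "Q ! i") auto
    obtain e2 a2 b2 where QSi: "Q ! Suc i = (e2, a2, b2)" by (cases "Q ! Suc i") auto
    have mi: "m = cost (take (Suc i) Q)" using j i by simp
    have test': "\<forall>s\<in>{0..cost Q}. \<bar>s - m\<bar> < r \<longrightarrow> u (gam G x Q s) \<le> a + b * s + c * s\<^sup>2 - \<eta> * \<bar>s - m\<bar>"
      using test unfolding D_def .
    show False
    proof (cases "e1 = e2")
      case True
      have nb: "sgn (b1 - a1) = sgn (b2 - a2)"
        using no_backtrack[OF Q y _ nzQ i' Qi] QSi True cQ by simp
      show False using H4same[OF vs Q nzQ i' Qi _ nb mi r \<eta> test' eqm] QSi True by simp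
    next
      case False
      show False using H4vert[OF vs Q nzQ i' Qi QSi False mi r \<eta> test' eqm] .
    qed
  qed
  have "D - s0 = gdist G y z"
    using cQ xyz gdist_sym[of z y] unfolding on_min_path_def D_def s0_def by simp
  then have "u z \<le> (gdist G y z * u x + gdist G x z * u y) / gdist G x y"
    using main gz g0 gD unfolding D_def s0_def cQ by simp
  then show "u z \<le> gdist G y z / gdist G x y * u x + gdist G x z / gdist G x y * u y"
    by (simp add: add_divide_distrib)
qed

end

theorem theorem2p1:
  fixes G :: "('v, 'e) mgraph" and u :: "('v, 'e) gpoint \<Rightarrow> real"
  assumes "metric_graph G"
  shows "mg_convex G u \<longleftrightarrow> viscosity_subsolution G u"
proof -
  interpret mg G using assms by unfold_locales
  show ?thesis using dir1 dir2 by blast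
qed

end
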